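(* Let $m\ge 1$, $1\le m_c\le m$, $T>0$, fix a nonnegative initial state, and consider the optimal control problem of minimizing \[ J(u)=\int_0^T\Big(\sum_{j=1}^{m_c}M_{j,i}+A_a u_a^2+A_s u_s^2+A_\kappa u_\kappa^2+\sum_{j=1}^{m_c}A_j u_j^2\Big)\,dt \] over measurable controls $u=(u_a,u_s,u_\kappa,u_1,\dots,u_{m_c}):[0,T]\to [0,u_{Amax}]\times[0,u_{Smax}]\times[0,u_{Kmax}]\times\prod_{j=1}^{m_c}[0,u_{Mmax,j}]$, subject to the state $x=(E,S_s,S_i,L,M_{1,s},M_{1,i},\dots,M_{m,s},M_{m,i})$ solving \[ \begin{aligned} E' &= \sum_{j=1}^{m}\theta_j M_{j,i} - \omega_s S_s E - \mu_e E - u_aE,\\ S_s' &= -\omega_s\beta_s S_s E + \alpha_s (S_s+S_i)\Big(1-\frac{u_\kappa(S_s+S_i)}{\kappa_s}\Big) - \mu_s S_s - u_sS_s,\\ S_i' &= \omega_s\beta_s S_s E - (\mu_s+\gamma_s) S_i - u_sS_i,\\ L' &= \nu_s S_i - \sum_{j=1}^{m}\omega_j M_{j,s} L - \mu_l L - u_aL,\\ M_{j,s}' &= -\omega_j\beta_j L M_{j,s} + \alpha_j - \mu_j M_{j,s}, \qquad 1\le j\le m,\\ M_{j,i}' &= \omega_j\beta_j L M_{j,s} - (\mu_j+\gamma_j) M_{j,i} - u_jM_{j,i}, \qquad 1\le j\le m, \end{aligned} \] with $u_j\equiv0$ for $j>m_c$. Let $\mathcal{H}(x,u,\Lambda)$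 be the Hamiltonian equal to the integrand of $J$ plus $\lambda_1 E'+\lambda_2 S_s'+\lambda_3 S_i'+\lambda_4 L'+\sum_{j=1}^m(\lambda_{j,s}M_{j,s}'+\lambda_{j,i}M_{j,i}')$ (each derivative replaced by the corresponding right-hand side above), where $\Lambda=(\lambda_1,\lambda_2,\lambda_3,\lambda_4,\lambda_{1,s},\lambda_{1,i},\dots,\lambda_{m,s},\lambda_{m,i})$. Let $u^*$ be an optimal control with optimal state $x$, and let $\Lambda$ be the adjoint variables solving $\Lambda'=-\partial\mathcal{H}/\partial x$ along $(x,u^* )$ with $\Lambda(T)=0$. Then, for $1\le j\le m_c$, \[ \begin{aligned} u_a^*(t)&=\max\Big(0,\min\Big(\frac{\lambda_1(t)E(t)+\lambda_4(t)L(t)}{2A_a},u_{Amax}\Big)\Big),\\ u_s^*(t)&=\max\Big(0,\min\Big(\frac{\lambda_2(t)S_s(t)+\lambda_3(t)S_i(t)}{2A_s},u_{Smax}\Big)\Big),\\ u_\kappa^*(t)&=\max\Big(0,\min\Big(\frac{\alpha_s\lambda_2(t)(S_s(t)+S_i(t))^2}{2\kappa_sA_\kappa},u_{Kmax}\Big)\Big),\\ u_j^*(t)&=\max\Big(0,\min\Big(\frac{\lambda_{j,i}(t)M_{j,i}(t)}{2A_j},u_{Mmax,j}\Big)\Big). \end{aligned} \]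
   Context: All model parameters $\theta_j,\omega_j,\beta_j,\alpha_j,\mu_j,\gamma_j$ ($1\le j\le m$), $\omega_s,\beta_s,\alpha_s,\kappa_s,\mu_s,\gamma_s,\nu_s,\mu_e,\mu_l$, the weights $A_a,A_s,A_\kappa,A_j$ and the control bounds are positive constants. State variables: $E$ eggs, $S_s,S_i$ susceptible/infected snails, $L$ larvae, $M_{j,s},M_{j,i}$ susceptible/infected mammals of species $j$. Controls: $u_a$ aquatic control, $u_s$ molluscicide, $u_\kappa$ habitat modification (the paper writes the logistic term as $1-\frac{S_s+S_i}{\kappa_s/u_\kappa}$), $u_j$ treatment of mammal species $j$. *)

theory Defs
  imports "HOL-Analysis.Analysis"
begin

datatype coord = CE | CSs | CSi | CL | CMs nat | CMi nat

datatype cidx = Ua | Us | Uk | Uj nat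

definition coords :: "nat \<Rightarrow> coord set" where
  "coords m = {CE, CSs, CSi, CL} \<union> CMs ` {1..m} \<union> CMi ` {1..m}"

record params =
  theta :: "nat \<Rightarrow> real"
  omega :: "nat \<Rightarrow> real"
  beta :: "nat \<Rightarrow> real"
  alpha :: "nat \<Rightarrow> real"
  mu :: "nat \<Rightarrow> real"
  gamma :: "nat \<Rightarrow> real"
  omega_s :: real
  beta_s :: real
  alpha_s :: real
  kappa_s :: real
  mu_s :: real
  gamma_s :: real
  nu_s :: real
  mu_e :: real
  mu_l :: real
  A_a :: real
  A_s :: real
  A_k :: real
  A_j :: "nat \<Rightarrow> real"
  uAmax :: real
  uSmax :: real
  uKmax :: real
  uMmax :: "nat \<Rightarrow> real"

definition pos_params :: "params \<Rightarrow> nat \<Rightarrow> nat \<Rightarrow> bool" where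
  "pos_params p m mc \<longleftrightarrow>
     (\<forall>j\<in>{1..m}. theta p j > 0 \<and> omega p j > 0 \<and> beta p j > 0 \<and> alpha p j > 0
                 \<and> mu p j > 0 \<and> gamma p j > 0) \<and>
     omega_s p > 0 \<and> beta_s p > 0 \<and> alpha_s p > 0 \<and> kappa_s p > 0 \<and> mu_s p > 0 \<and>
     gamma_s p > 0 \<and> nu_s p > 0 \<and> mu_e p > 0 \<and> mu_l p > 0 \<and>
     A_a p > 0 \<and> A_s p > 0 \<and> A_k p > 0 \<and> uAmax p > 0 \<and> uSmax p > 0 \<and> uKmax p > 0 \<and>
     (\<forall>j\<in>{1..mc}. A_j p j > 0 \<and> uMmax p j > 0)"

fun rhs :: "params \<Rightarrow> nat \<Rightarrow> (cidx \<Rightarrow> real) \<Rightarrow> (coord \<Rightarrow> real) \<Rightarrow> coord \<Rightarrow> real" where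
  "rhs p m u x CE = (\<Sum>j=1..m. theta p j * x (CMi j)) - omega_s p * x CSs * x CE
       - mu_e p * x CE - u Ua * x CE"
| "rhs p m u x CSs = - omega_s p * beta_s p * x CSs * x CE
       + alpha_s p * (x CSs + x CSi) * (1 - u Uk * (x CSs + x CSi) / kappa_s p)
       - mu_s p * x CSs - u Us * x CSs"
| "rhs p m u x CSi = omega_s p * beta_s p * x CSs * x CE - (mu_s p + gamma_s p) * x CSi
       - u Us * x CSi"
| "rhs p m u x CL = nu_s p * x CSi - (\<Sum>j=1..m. omega p j * x (CMs j) * x CL)
       - mu_l p * x CL - u Ua * x CL"
| "rhs p m u x (CMs j) = - omega p j * beta p j * x CL * x (CMs j) + alpha p j
       - mu p j * x (CMs j)"
| "rhs p m u x (CMi j) = omega p j * beta p j * x CL * x (CMs j)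
       - (mu p j + gamma p j) * x (CMi j) - u (Uj j) * x (CMi j)"

definition running_cost :: "params \<Rightarrow> nat \<Rightarrow> (coord \<Rightarrow> real) \<Rightarrow> (cidx \<Rightarrow> real) \<Rightarrow> real" where
  "running_cost p mc x u =
     (\<Sum>j=1..mc. x (CMi j)) + A_a p * (u Ua)\<^sup>2 + A_s p * (u Us)\<^sup>2 + A_k p * (u Uk)\<^sup>2
     + (\<Sum>j=1..mc. A_j p j * (u (Uj j))\<^sup>2)"

definition cost_J :: "params \<Rightarrow> nat \<Rightarrow> real \<Rightarrow> (real \<Rightarrow> coord \<Rightarrow> real) \<Rightarrow> (real \<Rightarrow> cidx \<Rightarrow> real) \<Rightarrow> real" where
  "cost_J p mc T x u = (LINT t:{0..T}|lborel. running_cost p mc (x t) (u t))"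

definition hamiltonian :: "params \<Rightarrow> nat \<Rightarrow> nat \<Rightarrow> (coord \<Rightarrow> real) \<Rightarrow> (cidx \<Rightarrow> real) \<Rightarrow> (coord \<Rightarrow> real) \<Rightarrow> real" where
  "hamiltonian p m mc x u lam = running_cost p mc x u + (\<Sum>c\<in>coords m. lam c * rhs p m u x c)"

definition admissible :: "params \<Rightarrow> nat \<Rightarrow> real \<Rightarrow> (real \<Rightarrow> cidx \<Rightarrow> real) \<Rightarrow> bool" where
  "admissible p mc T u \<longleftrightarrow>
     (\<forall>c. set_borel_measurable lborel {0..T} (\<lambda>t. u t c)) \<and>
     (\<forall>t\<in>{0..T}. 0 \<le> u t Ua \<and> u t Ua \<le> uAmax p \<and> 0 \<le> u t Us \<and> u t Us \<le> uSmax p \<and>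
        0 \<le> u t Uk \<and> u t Uk \<le> uKmax p \<and>
        (\<forall>j\<in>{1..mc}. 0 \<le> u t (Uj j) \<and> u t (Uj j) \<le> uMmax p j) \<and>
        (\<forall>j. j \<notin> {1..mc} \<longrightarrow> u t (Uj j) = 0))"

definition state_sol :: "params \<Rightarrow> nat \<Rightarrow> real \<Rightarrow> (coord \<Rightarrow> real) \<Rightarrow> (real \<Rightarrow> cidx \<Rightarrow> real)
     \<Rightarrow> (real \<Rightarrow> coord \<Rightarrow> real) \<Rightarrow> bool" where
  "state_sol p m T x0 u x \<longleftrightarrow>
     (\<forall>c\<in>coords m. x 0 c = x0 c \<and>
        (\<forall>t\<in>{0..T}. set_integrable lborel {0..t} (\<lambda>s. rhs p m (u s) (x s) c) \<and>
                    x t c - x 0 c = (LINT s:{0..t}|lborel. rhs p m (u s) (x s) c)))"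

definition dH_dx :: "params \<Rightarrow> nat \<Rightarrow> nat \<Rightarrow> coord \<Rightarrow> (coord \<Rightarrow> real) \<Rightarrow> (cidx \<Rightarrow> real) \<Rightarrow> (coord \<Rightarrow> real) \<Rightarrow> real" where
  "dH_dx p m mc c x u lam = deriv (\<lambda>z. hamiltonian p m mc (x(c := z)) u lam) (x c)"

definition adjoint_sol :: "params \<Rightarrow> nat \<Rightarrow> nat \<Rightarrow> real \<Rightarrow> (real \<Rightarrow> cidx \<Rightarrow> real)
     \<Rightarrow> (real \<Rightarrow> coord \<Rightarrow> real) \<Rightarrow> (real \<Rightarrow> coord \<Rightarrow> real) \<Rightarrow> bool" where
  "adjoint_sol p m mc T u x lam \<longleftrightarrow>
     (\<forall>c\<in>coords m. lam T c = 0 \<and>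
        (\<forall>t\<in>{0..T}. set_integrable lborel {t..T} (\<lambda>s. dH_dx p m mc c (x s) (u s) (lam s)) \<and>
            lam T c - lam t c = (LINT s:{t..T}|lborel. - dH_dx p m mc c (x s) (u s) (lam s))))"

end

theory Submission
  imports Defs
begin


definition nrm :: "nat \<Rightarrow> (coord \<Rightarrow> real) \<Rightarrow> real" where
  "nrm m v = (\<Sum>c\<in>coords m. \<bar>v c\<bar>)"

fun Df :: "params \<Rightarrow> nat \<Rightarrow> (cidx \<Rightarrow> real) \<Rightarrow> (coord \<Rightarrow> real) \<Rightarrow> (coord \<Rightarrow> real) \<Rightarrow> coord \<Rightarrow> real" where
  "Df p m u x v CE = (\<Sum>j=1..m. theta p j * v (CMi j)) - omega_s p * (v CSs * x CE + x CSs * v CE)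
       - mu_e p * v CE - u Ua * v CE"
| "Df p m u x v CSs = - omega_s p * beta_s p * (v CSs * x CE + x CSs * v CE)
       + alpha_s p * (v CSs + v CSi) * (1 - u Uk * (x CSs + x CSi) / kappa_s p)
       - alpha_s p * (x CSs + x CSi) * (u Uk * (v CSs + v CSi) / kappa_s p)
       - mu_s p * v CSs - u Us * v CSs"
| "Df p m u x v CSi = omega_s p * beta_s p * (v CSs * x CE + x CSs * v CE) - (mu_s p + gamma_s p) * v CSi
       - u Us * v CSi"
| "Df p m u x v CL = nu_s p * v CSi - (\<Sum>j=1..m. omega p j * (v (CMs j) * x CL + x (CMs j) * v CL))
       - mu_l p * v CL - u Ua * v CL"
| "Df p m u x v (CMs j) = - omega p j * beta p j * (v CL * x (CMs j) + x CL * v (CMs j))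
       - mu p j * v (CMs j)"
| "Df p m u x v (CMi j) = omega p j * beta p j * (v CL * x (CMs j) + x CL * v (CMs j))
       - (mu p j + gamma p j) * v (CMi j) - u (Uj j) * v (CMi j)"

fun Qf :: "params \<Rightarrow> nat \<Rightarrow> (cidx \<Rightarrow> real) \<Rightarrow> (coord \<Rightarrow> real) \<Rightarrow> coord \<Rightarrow> real" where
  "Qf p m u v CE = - omega_s p * v CSs * v CE"
| "Qf p m u v CSs = - omega_s p * beta_s p * v CSs * v CE - alpha_s p * u Uk * (v CSs + v CSi)^2 / kappa_s p"
| "Qf p m u v CSi = omega_s p * beta_s p * v CSs * v CE"
| "Qf p m u v CL = - (\<Sum>j=1..m. omega p j * v (CMs j) * v CL)"
| "Qf p m u v (CMs j) = - omega p j * beta p j * v CL * v (CMs j)"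
| "Qf p m u v (CMi j) = omega p j * beta p j * v CL * v (CMs j)"

lemma rhs_expand:
  "rhs p m u (\<lambda>c. x c + v c) c = rhs p m u x c + Df p m u x v c + Qf p m u v c"
proof (cases c)
  case CE
  then show ?thesis by (simp add: algebra_simps sum.distrib)
next
  case CSs
  then show ?thesis by (simp add: algebra_simps power2_eq_square diff_divide_distrib add_divide_distrib)
next
  case CSi
  then show ?thesis by (simp add: algebra_simps)
next
  case CL
  then show ?thesis by (simp add: algebra_simps sum.distrib sum_subtractf)
next
  case (CMs j)
  then show ?thesis by (simp add: algebra_simps)
next
  case (CMi j)
  then show ?thesis by (simp add: algebra_simps)
qed

lemma coords_eq: "coords m = {CE, CSs, CSi, CL} \<union> (CMs ` {1..m} \<union> CMi ` {1..m})"
  unfolding coords_def by auto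

lemma finite_coords[simp]: "finite (coords m)"
  unfolding coords_def by auto

lemma sum_coords:
  "(\<Sum>c\<in>coords m. g c) = g CE + g CSs + g CSi + g CL + (\<Sum>j=1..m. g (CMs j)) + (\<Sum>j=1..m. g (CMi j))"
proof -
  have d1: "{CE, CSs, CSi, CL} \<inter> (CMs ` {1..m} \<union> CMi ` {1..m}) = {}" by auto
  have d2: "CMs ` {1..m} \<inter> CMi ` {1..m} = {}" by auto
  have "(\<Sum>c\<in>coords m. g c) = (\<Sum>c\<in>{CE, CSs, CSi, CL}. g c) + (\<Sum>c\<in>CMs ` {1..m} \<union> CMi ` {1..m}. g c)"
    unfolding coords_eq by (rule sum.union_disjoint) (use d1 in auto)
  also have "(\<Sum>c\<in>CMs ` {1..m} \<union> CMi ` {1..m}. g c) = (\<Sum>c\<in>CMs ` {1..m}. g c) + (\<Sum>c\<in>CMi ` {1..m}. g c)"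
    by (rule sum.union_disjoint) (use d2 in auto)
  also have "(\<Sum>c\<in>CMs ` {1..m}. g c) = (\<Sum>j=1..m. g (CMs j))"
    by (subst sum.reindex) (auto simp: inj_on_def)
  also have "(\<Sum>c\<in>CMi ` {1..m}. g c) = (\<Sum>j=1..m. g (CMi j))"
    by (subst sum.reindex) (auto simp: inj_on_def)
  finally show ?thesis by (simp add: add.assoc)
qed

lemma CE_in[simp]: "CE \<in> coords m" and CSs_in[simp]: "CSs \<in> coords m"
  and CSi_in[simp]: "CSi \<in> coords m" and CL_in[simp]: "CL \<in> coords m"
  unfolding coords_def by auto

lemma CMs_in[simp]: "CMs j \<in> coords m \<longleftrightarrow> j \<in> {1..m}"
  and CMi_in[simp]: "CMi j \<in> coords m \<longleftrightarrow> j \<in> {1..m}"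
  unfolding coords_def by auto

definition Dh :: "params \<Rightarrow> nat \<Rightarrow> nat \<Rightarrow> (cidx \<Rightarrow> real) \<Rightarrow> (coord \<Rightarrow> real) \<Rightarrow> (coord \<Rightarrow> real) \<Rightarrow> (coord \<Rightarrow> real) \<Rightarrow> real" where
  "Dh p m mc u lam x v = (\<Sum>j=1..mc. v (CMi j)) + (\<Sum>c\<in>coords m. lam c * Df p m u x v c)"

definition Qh :: "params \<Rightarrow> nat \<Rightarrow> (cidx \<Rightarrow> real) \<Rightarrow> (coord \<Rightarrow> real) \<Rightarrow> (coord \<Rightarrow> real) \<Rightarrow> real" where
  "Qh p m u lam v = (\<Sum>c\<in>coords m. lam c * Qf p m u v c)"

lemma ham_expand:
  "hamiltonian p m mc (\<lambda>c. x c + v c) u lam = hamiltonian p m mc x u lam + Dh p m mc u lam x v + Qh p m u lam v"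
  unfolding hamiltonian_def running_cost_def Dh_def Qh_def
  by (simp only: rhs_expand) (simp add: sum.distrib algebra_simps)

lemma Df_smult: "Df p m u x (\<lambda>c. s * v c) c = s * Df p m u x v c"
  by (cases c) (simp_all add: algebra_simps sum_distrib_left divide_inverse)

lemma Df_add: "Df p m u x (\<lambda>c. v c + w c) c = Df p m u x v c + Df p m u x w c"
  by (cases c) (simp_all add: algebra_simps sum.distrib divide_inverse)

lemma Qf_smult: "Qf p m u (\<lambda>c. s * v c) c = s^2 * Qf p m u v c"
  by (cases c) (simp_all add: algebra_simps power2_eq_square sum_distrib_left)

lemma Dh_smult: "Dh p m mc u lam x (\<lambda>c. s * v c) = s * Dh p m mc u lam x v"
  unfolding Dh_def by (simp add: Df_smult sum_distrib_left algebra_simps)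

lemma Dh_add: "Dh p m mc u lam x (\<lambda>c. v c + w c) = Dh p m mc u lam x v + Dh p m mc u lam x w"
  unfolding Dh_def by (simp add: Df_add sum.distrib algebra_simps)

lemma Dh_zero: "Dh p m mc u lam x (\<lambda>c. 0) = 0"
  using Dh_smult[of p m mc u lam x 0 "\<lambda>c. 0"] by simp

lemma Qh_smult: "Qh p m u lam (\<lambda>c. s * v c) = s^2 * Qh p m u lam v"
  unfolding Qh_def by (simp add: Qf_smult sum_distrib_left algebra_simps)

definition ec :: "coord \<Rightarrow> coord \<Rightarrow> real" where "ec c0 = (\<lambda>c. if c = c0 then 1 else 0)"

lemma Dh_sum:
  assumes "finite F"
  shows "Dh p m mc u lam x (\<lambda>c'. \<Sum>c\<in>F. f c c') = (\<Sum>c\<in>F. Dh p m mc u lam x (f c))"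
  using assms
proof (induction F rule: finite_induct)
  case empty then show ?case by (simp add: Dh_zero)
next
  case (insert a F)
  then show ?case by (simp add: Dh_add)
qed

lemma Dh_decomp:
  assumes "\<And>c. c \<notin> coords m \<Longrightarrow> v c = 0"
  shows "Dh p m mc u lam x v = (\<Sum>c\<in>coords m. v c * Dh p m mc u lam x (ec c))"
proof -
  have "v = (\<lambda>c'. \<Sum>c\<in>coords m. v c * ec c c')"
  proof
    fix c'
    have "(\<Sum>c\<in>coords m. v c * ec c c') = (\<Sum>c\<in>coords m. if c = c' then v c' else 0)"
      by (rule sum.cong) (auto simp: ec_def)
    then show "v c' = (\<Sum>c\<in>coords m. v c * ec c c')"
      using assms[of c'] by (simp add: sum.delta')
  qed
  then have "Dh p m mc u lam x v = Dh p m mc u lam x (\<lambda>c'. \<Sum>c\<in>coords m. v c * ec c c')" by simp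
  also have "\<dots> = (\<Sum>c\<in>coords m. Dh p m mc u lam x (\<lambda>c'. v c * ec c c'))"
    by (rule Dh_sum) simp
  also have "\<dots> = (\<Sum>c\<in>coords m. v c * Dh p m mc u lam x (ec c))"
    by (simp add: Dh_smult)
  finally show ?thesis .
qed

lemma dH_dx_eq: "dH_dx p m mc c0 x u lam = Dh p m mc u lam x (ec c0)"
proof -
  have upd: "x(c0 := z) = (\<lambda>c. x c + (z - x c0) * ec c0 c)" for z
    by (auto simp: ec_def)
  have H: "hamiltonian p m mc (x(c0 := z)) u lam = hamiltonian p m mc x u lam
      + (z - x c0) * Dh p m mc u lam x (ec c0) + (z - x c0)^2 * Qh p m u lam (ec c0)" for z
    unfolding upd ham_expand Dh_smult Qh_smult by simp
  have "((\<lambda>z. hamiltonian p m mc x u lam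
      + (z - x c0) * Dh p m mc u lam x (ec c0) + (z - x c0)^2 * Qh p m u lam (ec c0))
      has_real_derivative (1 * Dh p m mc u lam x (ec c0) + 2 * (x c0 - x c0) * 1 * Qh p m u lam (ec c0))) (at (x c0))"
    by (intro derivative_eq_intros) auto
  then have "((\<lambda>z. hamiltonian p m mc (x(c0 := z)) u lam) has_real_derivative Dh p m mc u lam x (ec c0)) (at (x c0))"
    unfolding H by simp
  then show ?thesis unfolding dH_dx_def by (rule DERIV_imp_deriv)
qed




definition okx :: "nat \<Rightarrow> real \<Rightarrow> real \<Rightarrow> (coord \<Rightarrow> real) \<Rightarrow> (cidx \<Rightarrow> real) \<Rightarrow> bool" where
  "okx m R U x u \<longleftrightarrow> (\<forall>c\<in>coords m. \<bar>x c\<bar> \<le> R) \<and> \<bar>u Ua\<bar> \<le> U \<and> \<bar>u Us\<bar> \<le> U \<and> \<bar>u Uk\<bar> \<le> U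
      \<and> (\<forall>j\<in>{1..m}. \<bar>u (Uj j)\<bar> \<le> U)"

definition LB :: "nat \<Rightarrow> real \<Rightarrow> real \<Rightarrow> ((coord \<Rightarrow> real) \<Rightarrow> (cidx \<Rightarrow> real) \<Rightarrow> (coord \<Rightarrow> real) \<Rightarrow> real) \<Rightarrow> bool" where
  "LB m R U F \<longleftrightarrow> (\<exists>K. \<forall>x u v. okx m R U x u \<longrightarrow> \<bar>F x u v\<bar> \<le> K * nrm m v)"

definition QB :: "nat \<Rightarrow> real \<Rightarrow> real \<Rightarrow> ((coord \<Rightarrow> real) \<Rightarrow> (cidx \<Rightarrow> real) \<Rightarrow> (coord \<Rightarrow> real) \<Rightarrow> real) \<Rightarrow> bool" where
  "QB m R U F \<longleftrightarrow> (\<exists>K. \<forall>x u v. okx m R U x u \<longrightarrow> \<bar>F x u v\<bar> \<le> K * (nrm m v)^2)"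

definition BD :: "nat \<Rightarrow> real \<Rightarrow> real \<Rightarrow> ((coord \<Rightarrow> real) \<Rightarrow> (cidx \<Rightarrow> real) \<Rightarrow> real) \<Rightarrow> bool" where
  "BD m R U g \<longleftrightarrow> (\<exists>K. \<forall>x u. okx m R U x u \<longrightarrow> \<bar>g x u\<bar> \<le> K)"

lemma nrm_nonneg: "0 \<le> nrm m v"
  unfolding nrm_def by (simp add: sum_nonneg)

lemma nrm_ge: "c \<in> coords m \<Longrightarrow> \<bar>v c\<bar> \<le> nrm m v"
  unfolding nrm_def by (rule member_le_sum) auto

lemma BD_const[intro]: "BD m R U (\<lambda>x u. k)"
  unfolding BD_def by auto

lemma BD_x[intro]: "c \<in> coords m \<Longrightarrow> BD m R U (\<lambda>x u. x c)"
  unfolding BD_def okx_def by auto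

lemma BD_Ua[intro]: "BD m R U (\<lambda>x u. u Ua)" and BD_Us[intro]: "BD m R U (\<lambda>x u. u Us)"
  and BD_Uk[intro]: "BD m R U (\<lambda>x u. u Uk)"
  unfolding BD_def okx_def by auto

lemma BD_Uj[intro]: "j \<in> {1..m} \<Longrightarrow> BD m R U (\<lambda>x u. u (Uj j))"
  unfolding BD_def okx_def by (rule exI[of _ U]) auto

lemma BD_add[intro]: "BD m R U f \<Longrightarrow> BD m R U g \<Longrightarrow> BD m R U (\<lambda>x u. f x u + g x u)"
  unfolding BD_def
proof (elim exE)
  fix K1 K2 assume 1: "\<forall>x u. okx m R U x u \<longrightarrow> \<bar>f x u\<bar> \<le> K1" and 2: "\<forall>x u. okx m R U x u \<longrightarrow> \<bar>g x u\<bar> \<le> K2"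
  show "\<exists>K. \<forall>x u. okx m R U x u \<longrightarrow> \<bar>f x u + g x u\<bar> \<le> K"
    by (rule exI[of _ "K1 + K2"]) (use 1 2 in \<open>smt (verit)\<close>)
qed

lemma BD_diff[intro]: "BD m R U f \<Longrightarrow> BD m R U g \<Longrightarrow> BD m R U (\<lambda>x u. f x u - g x u)"
  unfolding BD_def
proof (elim exE)
  fix K1 K2 assume 1: "\<forall>x u. okx m R U x u \<longrightarrow> \<bar>f x u\<bar> \<le> K1" and 2: "\<forall>x u. okx m R U x u \<longrightarrow> \<bar>g x u\<bar> \<le> K2"
  show "\<exists>K. \<forall>x u. okx m R U x u \<longrightarrow> \<bar>f x u - g x u\<bar> \<le> K"
    by (rule exI[of _ "K1 + K2"]) (use 1 2 in \<open>smt (verit)\<close>)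
qed

lemma BD_minus[intro]: "BD m R U f \<Longrightarrow> BD m R U (\<lambda>x u. - f x u)"
  unfolding BD_def by auto

lemma BD_mult[intro]: "BD m R U f \<Longrightarrow> BD m R U g \<Longrightarrow> BD m R U (\<lambda>x u. f x u * g x u)"
  unfolding BD_def
proof (elim exE)
  fix K1 K2 assume 1: "\<forall>x u. okx m R U x u \<longrightarrow> \<bar>f x u\<bar> \<le> K1" and 2: "\<forall>x u. okx m R U x u \<longrightarrow> \<bar>g x u\<bar> \<le> K2"
  show "\<exists>K. \<forall>x u. okx m R U x u \<longrightarrow> \<bar>f x u * g x u\<bar> \<le> K"
  proof (rule exI[of _ "K1 * K2"], intro allI impI)
    fix x u assume ok: "okx m R U x u"
    have a: "\<bar>f x u\<bar> \<le> K1" "\<bar>g x u\<bar> \<le> K2" using 1 2 ok by auto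
    show "\<bar>f x u * g x u\<bar> \<le> K1 * K2" unfolding abs_mult
      by (rule mult_mono[OF a]) (use a in auto)
  qed
qed

lemma BD_div[intro]: "BD m R U f \<Longrightarrow> BD m R U (\<lambda>x u. f x u / k)"
  unfolding divide_inverse by (intro BD_mult BD_const)

lemma BD_sum[intro]: "finite S \<Longrightarrow> (\<And>j. j \<in> S \<Longrightarrow> BD m R U (f j)) \<Longrightarrow> BD m R U (\<lambda>x u. \<Sum>j\<in>S. f j x u)"
  by (induction S rule: finite_induct) (auto intro: BD_add)

lemma LB_coord[intro]: "c \<in> coords m \<Longrightarrow> LB m R U (\<lambda>x u v. v c)"
  unfolding LB_def by (auto intro!: exI[of _ 1] nrm_ge)

lemma LB_add[intro]: "LB m R U F \<Longrightarrow> LB m R U G \<Longrightarrow> LB m R U (\<lambda>x u v. F x u v + G x u v)"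
  unfolding LB_def
proof (elim exE)
  fix K1 K2 assume 1: "\<forall>x u v. okx m R U x u \<longrightarrow> \<bar>F x u v\<bar> \<le> K1 * nrm m v"
    and 2: "\<forall>x u v. okx m R U x u \<longrightarrow> \<bar>G x u v\<bar> \<le> K2 * nrm m v"
  show "\<exists>K. \<forall>x u v. okx m R U x u \<longrightarrow> \<bar>F x u v + G x u v\<bar> \<le> K * nrm m v"
    by (rule exI[of _ "K1 + K2"]) (use 1 2 in \<open>auto simp: distrib_right intro!: abs_triangle_ineq[THEN order_trans] add_mono\<close>)
qed

lemma LB_minus[intro]: "LB m R U F \<Longrightarrow> LB m R U (\<lambda>x u v. - F x u v)"
  unfolding LB_def by auto

lemma LB_diff[intro]: "LB m R U F \<Longrightarrow> LB m R U G \<Longrightarrow> LB m R U (\<lambda>x u v. F x u v - G x u v)"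
  using LB_add[of m R U F "\<lambda>x u v. - G x u v"] LB_minus[of m R U G] by simp

lemma LB_multl[intro]: "BD m R U g \<Longrightarrow> LB m R U F \<Longrightarrow> LB m R U (\<lambda>x u v. g x u * F x u v)"
  unfolding LB_def BD_def
proof (elim exE)
  fix K1 K2 assume 1: "\<forall>x u. okx m R U x u \<longrightarrow> \<bar>g x u\<bar> \<le> K1"
    and 2: "\<forall>x u v. okx m R U x u \<longrightarrow> \<bar>F x u v\<bar> \<le> K2 * nrm m v"
  show "\<exists>K. \<forall>x u v. okx m R U x u \<longrightarrow> \<bar>g x u * F x u v\<bar> \<le> K * nrm m v"
  proof (rule exI[of _ "\<bar>K1\<bar> * \<bar>K2\<bar>"], intro allI impI)
    fix x u v assume ok: "okx m R U x u"
    have a: "\<bar>g x u\<bar> \<le> \<bar>K1\<bar>" using 1 ok by force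
    have b: "\<bar>F x u v\<bar> \<le> \<bar>K2\<bar> * nrm m v"
      using 2 ok nrm_nonneg[of m v] by (meson abs_ge_self mult_right_mono order_trans)
    have "\<bar>g x u * F x u v\<bar> \<le> \<bar>K1\<bar> * (\<bar>K2\<bar> * nrm m v)"
      unfolding abs_mult by (rule mult_mono[OF a b]) auto
    then show "\<bar>g x u * F x u v\<bar> \<le> \<bar>K1\<bar> * \<bar>K2\<bar> * nrm m v" by (simp add: mult.assoc)
  qed
qed

lemma LB_multr[intro]: "BD m R U g \<Longrightarrow> LB m R U F \<Longrightarrow> LB m R U (\<lambda>x u v. F x u v * g x u)"
  using LB_multl[of m R U g F] by (simp add: mult.commute)

lemma LB_div[intro]: "LB m R U F \<Longrightarrow> LB m R U (\<lambda>x u v. F x u v / k)"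
  unfolding divide_inverse by (intro LB_multr BD_const)

lemma LB_sum[intro]: "finite S \<Longrightarrow> (\<And>j. j \<in> S \<Longrightarrow> LB m R U (F j)) \<Longrightarrow> LB m R U (\<lambda>x u v. \<Sum>j\<in>S. F j x u v)"
proof (induction S rule: finite_induct)
  case empty then show ?case unfolding LB_def by (auto intro!: exI[of _ 0])
next
  case (insert a S) then show ?case by (simp add: LB_add)
qed

lemma LB_Df: "c \<in> coords m \<Longrightarrow> LB m R U (\<lambda>x u v. Df p m u x v c)"
  by (cases c) (auto intro!: LB_add LB_diff LB_minus LB_multl LB_multr LB_sum LB_div LB_coord BD_x BD_const BD_Ua BD_Us BD_Uk BD_Uj BD_add BD_diff BD_mult BD_div)

lemma QB_LL[intro]: "LB m R U F \<Longrightarrow> LB m R U G \<Longrightarrow> QB m R U (\<lambda>x u v. F x u v * G x u v)"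
  unfolding LB_def QB_def
proof (elim exE)
  fix K1 K2 assume 1: "\<forall>x u v. okx m R U x u \<longrightarrow> \<bar>F x u v\<bar> \<le> K1 * nrm m v"
    and 2: "\<forall>x u v. okx m R U x u \<longrightarrow> \<bar>G x u v\<bar> \<le> K2 * nrm m v"
  show "\<exists>K. \<forall>x u v. okx m R U x u \<longrightarrow> \<bar>F x u v * G x u v\<bar> \<le> K * (nrm m v)^2"
  proof (rule exI[of _ "\<bar>K1\<bar> * \<bar>K2\<bar>"], intro allI impI)
    fix x u v assume ok: "okx m R U x u"
    have a: "\<bar>F x u v\<bar> \<le> \<bar>K1\<bar> * nrm m v"
      using 1 ok nrm_nonneg[of m v] by (meson abs_ge_self mult_right_mono order_trans)
    have b: "\<bar>G x u v\<bar> \<le> \<bar>K2\<bar> * nrm m v"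
      using 2 ok nrm_nonneg[of m v] by (meson abs_ge_self mult_right_mono order_trans)
    have "\<bar>F x u v * G x u v\<bar> \<le> (\<bar>K1\<bar> * nrm m v) * (\<bar>K2\<bar> * nrm m v)"
      unfolding abs_mult by (rule mult_mono[OF a b]) (auto simp: nrm_nonneg)
    then show "\<bar>F x u v * G x u v\<bar> \<le> \<bar>K1\<bar> * \<bar>K2\<bar> * (nrm m v)^2" by (simp add: power2_eq_square algebra_simps)
  qed
qed

lemma QB_pow2[intro]: "LB m R U F \<Longrightarrow> QB m R U (\<lambda>x u v. (F x u v)^2)"
  unfolding power2_eq_square by (rule QB_LL)

lemma QB_add[intro]: "QB m R U F \<Longrightarrow> QB m R U G \<Longrightarrow> QB m R U (\<lambda>x u v. F x u v + G x u v)"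
  unfolding QB_def
proof (elim exE)
  fix K1 K2 assume 1: "\<forall>x u v. okx m R U x u \<longrightarrow> \<bar>F x u v\<bar> \<le> K1 * (nrm m v)^2"
    and 2: "\<forall>x u v. okx m R U x u \<longrightarrow> \<bar>G x u v\<bar> \<le> K2 * (nrm m v)^2"
  show "\<exists>K. \<forall>x u v. okx m R U x u \<longrightarrow> \<bar>F x u v + G x u v\<bar> \<le> K * (nrm m v)^2"
    by (rule exI[of _ "K1 + K2"]) (use 1 2 in \<open>auto simp: distrib_right intro!: abs_triangle_ineq[THEN order_trans] add_mono\<close>)
qed

lemma QB_minus[intro]: "QB m R U F \<Longrightarrow> QB m R U (\<lambda>x u v. - F x u v)"
  unfolding QB_def by auto

lemma QB_diff[intro]: "QB m R U F \<Longrightarrow> QB m R U G \<Longrightarrow> QB m R U (\<lambda>x u v. F x u v - G x u v)"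
  using QB_add[of m R U F "\<lambda>x u v. - G x u v"] QB_minus[of m R U G] by simp

lemma QB_multl[intro]: "BD m R U g \<Longrightarrow> QB m R U F \<Longrightarrow> QB m R U (\<lambda>x u v. g x u * F x u v)"
  unfolding QB_def BD_def
proof (elim exE)
  fix K1 K2 assume 1: "\<forall>x u. okx m R U x u \<longrightarrow> \<bar>g x u\<bar> \<le> K1"
    and 2: "\<forall>x u v. okx m R U x u \<longrightarrow> \<bar>F x u v\<bar> \<le> K2 * (nrm m v)^2"
  show "\<exists>K. \<forall>x u v. okx m R U x u \<longrightarrow> \<bar>g x u * F x u v\<bar> \<le> K * (nrm m v)^2"
  proof (rule exI[of _ "\<bar>K1\<bar> * \<bar>K2\<bar>"], intro allI impI)
    fix x u v assume ok: "okx m R U x u"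
    have a: "\<bar>g x u\<bar> \<le> \<bar>K1\<bar>" using 1 ok by force
    have b: "\<bar>F x u v\<bar> \<le> \<bar>K2\<bar> * (nrm m v)^2"
      using 2 ok by (meson abs_ge_self mult_right_mono order_trans zero_le_power2)
    have "\<bar>g x u * F x u v\<bar> \<le> \<bar>K1\<bar> * (\<bar>K2\<bar> * (nrm m v)^2)"
      unfolding abs_mult by (rule mult_mono[OF a b]) auto
    then show "\<bar>g x u * F x u v\<bar> \<le> \<bar>K1\<bar> * \<bar>K2\<bar> * (nrm m v)^2" by (simp add: mult.assoc)
  qed
qed

lemma QB_div[intro]: "QB m R U F \<Longrightarrow> QB m R U (\<lambda>x u v. F x u v / k)"
proof -
  assume "QB m R U F"
  then have "QB m R U (\<lambda>x u v. inverse k * F x u v)" by (intro QB_multl BD_const)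
  then show ?thesis by (simp add: divide_inverse mult.commute)
qed

lemma QB_sum[intro]: "finite S \<Longrightarrow> (\<And>j. j \<in> S \<Longrightarrow> QB m R U (F j)) \<Longrightarrow> QB m R U (\<lambda>x u v. \<Sum>j\<in>S. F j x u v)"
proof (induction S rule: finite_induct)
  case empty then show ?case unfolding QB_def by (auto intro!: exI[of _ 0])
next
  case (insert a S) then show ?case by (simp add: QB_add)
qed

lemma QB_Qf: "c \<in> coords m \<Longrightarrow> QB m R U (\<lambda>x u v. Qf p m u v c)"
proof (cases "c = CSs")
  case True
  have "QB m R U (\<lambda>x u v. - omega_s p * beta_s p * v CSs * v CE - (alpha_s p * u Uk) * (v CSs + v CSi)^2 / kappa_s p)"
    by (intro QB_diff QB_div QB_multl QB_pow2 QB_LL LB_add LB_coord LB_multl BD_mult BD_const BD_Uk) auto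
  then show ?thesis using True by simp
next
  case False
  assume "c \<in> coords m"
  with False show ?thesis by (cases c) (auto intro!: QB_add QB_diff QB_minus QB_multl QB_LL QB_pow2 QB_sum QB_div
     LB_add LB_diff LB_minus LB_multl LB_multr LB_coord BD_x BD_const BD_Ua BD_Us BD_Uk BD_Uj BD_mult BD_minus)
qed

lemma BD_rhs: "c \<in> coords m \<Longrightarrow> BD m R U (\<lambda>x u. rhs p m u x c)"
  by (cases c) (auto intro!: BD_add BD_diff BD_minus BD_mult BD_div BD_sum BD_x BD_const BD_Ua BD_Us BD_Uk BD_Uj)

lemma uniformize:
  fixes F :: "'c \<Rightarrow> 'z \<Rightarrow> real"
  assumes "finite S" "\<And>c. c \<in> S \<Longrightarrow> \<exists>K. \<forall>z. P z \<longrightarrow> \<bar>F c z\<bar> \<le> K * w z" "\<And>z. 0 \<le> w z"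
  shows "\<exists>K. \<forall>c\<in>S. \<forall>z. P z \<longrightarrow> \<bar>F c z\<bar> \<le> K * w z"
  using assms(1,2)
proof (induction S rule: finite_induct)
  case empty then show ?case by auto
next
  case (insert a S)
  obtain K1 where K1: "\<forall>c\<in>S. \<forall>z. P z \<longrightarrow> \<bar>F c z\<bar> \<le> K1 * w z" using insert by auto
  have "\<exists>K. \<forall>z. P z \<longrightarrow> \<bar>F a z\<bar> \<le> K * w z" using insert.prems by blast
  then obtain K2 where K2: "\<forall>z. P z \<longrightarrow> \<bar>F a z\<bar> \<le> K2 * w z" by blast
  have "\<forall>c\<in>insert a S. \<forall>z. P z \<longrightarrow> \<bar>F c z\<bar> \<le> (\<bar>K1\<bar> + \<bar>K2\<bar>) * w z"
  proof (intro ballI allI impI)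
    fix c z assume c: "c \<in> insert a S" and Pz: "P z"
    have w: "0 \<le> w z" by (rule assms(3))
    have "K1 * w z \<le> (\<bar>K1\<bar> + \<bar>K2\<bar>) * w z" "K2 * w z \<le> (\<bar>K1\<bar> + \<bar>K2\<bar>) * w z"
      by (auto intro!: mult_right_mono w)
    then show "\<bar>F c z\<bar> \<le> (\<bar>K1\<bar> + \<bar>K2\<bar>) * w z" using c K1 K2 Pz by force
  qed
  then show ?case by blast
qed

lemma Df_bnd: "\<exists>K. \<forall>c\<in>coords m. \<forall>z. okx m R U (fst z) (fst (snd z)) \<longrightarrow>
    \<bar>Df p m (fst (snd z)) (fst z) (snd (snd z)) c\<bar> \<le> K * nrm m (snd (snd z))"
  by (rule uniformize) (use LB_Df in \<open>auto simp: LB_def nrm_nonneg\<close>)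

lemma Qf_bnd: "\<exists>K. \<forall>c\<in>coords m. \<forall>z. okx m R U (fst z) (fst (snd z)) \<longrightarrow>
    \<bar>Qf p m (fst (snd z)) (snd (snd z)) c\<bar> \<le> K * (nrm m (snd (snd z)))^2"
  by (rule uniformize) (use QB_Qf in \<open>auto simp: QB_def\<close>)

lemma rhs_bnd: "\<exists>K. \<forall>c\<in>coords m. \<forall>z. okx m R U (fst z) (snd z) \<longrightarrow>
    \<bar>rhs p m (snd z) (fst z) c\<bar> \<le> K * 1"
  by (rule uniformize) (use BD_rhs in \<open>auto simp: BD_def\<close>)




lemma sint_bdd:
  fixes g :: "real \<Rightarrow> real"
  assumes g: "g \<in> borel_measurable lborel" and A: "A \<in> sets lborel" "A \<subseteq> {a..b}"
    and bd: "\<And>s. s \<in> A \<Longrightarrow> \<bar>g s\<bar> \<le> M"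
  shows "set_integrable lborel A g"
proof -
  have "emeasure lborel A \<le> emeasure lborel {a..b}" using A by (intro emeasure_mono) auto
  also have "\<dots> < \<infinity>" by (cases "a \<le> b") auto
  finally have fin: "emeasure lborel A < \<infinity>" .
  have "integrable lborel (\<lambda>x. indicator A x *\<^sub>R M)"
    using integrable_real_indicator[OF A(1) fin] by (intro integrable_scaleR_left) simp
  then have "set_integrable lborel A (\<lambda>_. M)" unfolding set_integrable_def .
  moreover have "set_borel_measurable lborel A g" unfolding set_borel_measurable_def
    using g A(1) by (intro borel_measurable_scaleR borel_measurable_indicator) auto
  moreover have "AE x in lborel. x \<in> A \<longrightarrow> norm (g x) \<le> norm M"
  proof (rule AE_I2, intro impI)
    fix x assume "x \<in> A"
    then have "\<bar>g x\<bar> \<le> M" by (rule bd)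
    then show "norm (g x) \<le> norm M" by simp
  qed
  ultimately show ?thesis by (rule set_integrable_bound)
qed

lemma sint_abs_le:
  fixes g :: "real \<Rightarrow> real"
  assumes "set_integrable lborel A g"
  shows "\<bar>LINT s:A|lborel. g s\<bar> \<le> (LINT s:A|lborel. \<bar>g s\<bar>)"
proof -
  have i: "integrable lborel (\<lambda>x. indicator A x *\<^sub>R g x)" using assms unfolding set_integrable_def .
  have i2: "integrable lborel (\<lambda>x. indicator A x *\<^sub>R \<bar>g x\<bar>)" using set_integrable_abs[OF assms] unfolding set_integrable_def .
  show ?thesis unfolding set_lebesgue_integral_def
    by (rule integral_abs_bound_integral[OF i i2]) (auto simp: indicator_def)
qed

lemma sint_le_const:
  fixes g :: "real \<Rightarrow> real"
  assumes "set_integrable lborel A g" "A \<in> sets lborel" "emeasure lborel A \<noteq> \<infinity>" "\<And>s. s \<in> A \<Longrightarrow> g s \<le> M"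
  shows "(LINT s:A|lborel. g s) \<le> M * measure lborel A"
proof -
  have ic: "set_integrable lborel A (\<lambda>_. M)"
    unfolding set_integrable_def using assms(2,3)
    by (intro integrable_scaleR_left integrable_real_indicator) (auto simp: less_top)
  have "(LINT s:A|lborel. g s) \<le> (LINT s:A|lborel. M)"
    by (rule set_integral_mono[OF assms(1) ic assms(4)])
  also have "\<dots> = M * measure lborel A" using set_integral_const[OF assms(2,3), of M] by simp
  finally show ?thesis .
qed

lemma LINT_pow:
  assumes "0 \<le> t"
  shows "(LINT s:{0..t}|lborel. s ^ k) = t ^ Suc k / Suc k"
proof -
  have "(LINT s:{0..t}|lborel. s ^ k) = (\<integral>s. s ^ k * indicator {0..t} s \<partial>lborel)"
    unfolding set_lebesgue_integral_def by (simp add: mult.commute)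
  also have "\<dots> = t ^ Suc k / Suc k" using integral_power[OF assms, of k] by simp
  finally show ?thesis .
qed


lemma meas_indef:
  fixes g :: "real \<Rightarrow> real"
  assumes [measurable]: "g \<in> borel_measurable lborel"
  shows "(\<lambda>t. LINT s:{0..t}|lborel. g s) \<in> borel_measurable lborel"
  unfolding set_lebesgue_integral_def
proof (rule lborel.borel_measurable_lebesgue_integral)
  have "(\<lambda>(t, s). indicator {0..t} s *\<^sub>R g s) = (\<lambda>z::real\<times>real. (if 0 \<le> snd z \<and> snd z \<le> fst z then 1 else 0) * g (snd z))"
    by (auto simp: indicator_def fun_eq_iff)
  also have "\<dots> \<in> borel_measurable (lborel \<Otimes>\<^sub>M lborel)" by measurable
  finally show "(\<lambda>(t, s). indicator {0..t} s *\<^sub>R g s) \<in> borel_measurable (lborel \<Otimes>\<^sub>M lborel)" .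
qed

lemma meas_indef2:
  fixes g :: "real \<Rightarrow> real"
  assumes [measurable]: "g \<in> borel_measurable lborel"
  shows "(\<lambda>t. LINT s:{t..T}|lborel. g s) \<in> borel_measurable lborel"
  unfolding set_lebesgue_integral_def
proof (rule lborel.borel_measurable_lebesgue_integral)
  have "(\<lambda>(t, s). indicator {t..T} s *\<^sub>R g s) = (\<lambda>z::real\<times>real. (if fst z \<le> snd z \<and> snd z \<le> T then 1 else 0) * g (snd z))"
    by (auto simp: indicator_def fun_eq_iff)
  also have "\<dots> \<in> borel_measurable (lborel \<Otimes>\<^sub>M lborel)" by measurable
  finally show "(\<lambda>(t, s). indicator {t..T} s *\<^sub>R g s) \<in> borel_measurable (lborel \<Otimes>\<^sub>M lborel)" .
qed



lemma fubini_parts: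
  fixes g h :: "real \<Rightarrow> real"
  assumes [measurable]: "g \<in> borel_measurable lborel" "h \<in> borel_measurable lborel"
    and bg: "\<And>s. \<bar>g s\<bar> \<le> M" and bh: "\<And>s. \<bar>h s\<bar> \<le> M"
  shows "(LINT t:{0..T}|lborel. (LINT s:{t..T}|lborel. h s) * g t)
       = (LINT s:{0..T}|lborel. h s * (LINT t:{0..s}|lborel. g t))"
proof -
  define f where "f t s = (if 0 \<le> t \<and> t \<le> T then 1 else 0) * (if t \<le> s \<and> s \<le> T then 1 else 0) * (g t * h s)" for t s :: real
  have meas: "case_prod f \<in> borel_measurable (lborel \<Otimes>\<^sub>M lborel)"
  proof -
    have "case_prod f = (\<lambda>z. (if 0 \<le> fst z \<and> fst z \<le> T then 1 else 0) * (if fst z \<le> snd z \<and> snd z \<le> T then 1 else 0) * (g (fst z) * h (snd z)))"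
      by (auto simp: f_def fun_eq_iff)
    also have "\<dots> \<in> borel_measurable (lborel \<Otimes>\<^sub>M lborel)" by measurable
    finally show ?thesis .
  qed
  have M0: "0 \<le> M" using bg[of 0] by simp
  have int: "integrable (lborel \<Otimes>\<^sub>M lborel) (case_prod f)"
  proof (rule Bochner_Integration.integrable_bound)
    have sets: "{0..T} \<times> {0..T} \<in> sets (lborel \<Otimes>\<^sub>M lborel)" by simp
    have "emeasure (lborel \<Otimes>\<^sub>M lborel) ({0..T} \<times> {0..T}) = emeasure lborel {0..T} * emeasure lborel {0..T::real}"
      by (rule lborel.emeasure_pair_measure_Times) auto
    also have "\<dots> < \<infinity>" by (cases "0 \<le> T") (auto simp: ennreal_mult_less_top)
    finally have fin: "emeasure (lborel \<Otimes>\<^sub>M lborel) ({0..T} \<times> {0..T::real}) < \<infinity>" .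
    show "integrable (lborel \<Otimes>\<^sub>M lborel) (\<lambda>z. (M * M) *\<^sub>R indicator ({0..T} \<times> {0..T}) z :: real)"
      using integrable_real_indicator[OF sets fin] by (intro integrable_scaleR_right)
    show "case_prod f \<in> borel_measurable (lborel \<Otimes>\<^sub>M lborel)" by (rule meas)
    show "AE z in lborel \<Otimes>\<^sub>M lborel. norm (case_prod f z) \<le> norm ((M * M) *\<^sub>R indicator ({0..T} \<times> {0..T}) z :: real)"
    proof (rule AE_I2)
      fix z :: "real \<times> real"
      obtain t s where z: "z = (t, s)" by fastforce
      have "\<bar>g t * h s\<bar> \<le> M * M" unfolding abs_mult by (rule mult_mono) (auto simp: bg bh M0)
      then show "norm (case_prod f z) \<le> norm ((M * M) *\<^sub>R indicator ({0..T} \<times> {0..T}) z :: real)"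
        using M0 by (auto simp: z f_def indicator_def)
    qed
  qed
  have F: "(\<integral>s. (\<integral>t. f t s \<partial>lborel) \<partial>lborel) = (\<integral>t. (\<integral>s. f t s \<partial>lborel) \<partial>lborel)"
    by (rule lborel_pair.Fubini_integral[OF int])
  have L: "(\<integral>s. f t s \<partial>lborel) = indicator {0..T} t * ((LINT s:{t..T}|lborel. h s) * g t)" for t
  proof -
    have "(\<lambda>s. f t s) = (\<lambda>s. (indicator {0..T} t * g t) * (indicator {t..T} s * h s))"
      by (auto simp: f_def indicator_def fun_eq_iff)
    then show ?thesis unfolding set_lebesgue_integral_def by simp
  qed
  have R: "(\<integral>t. f t s \<partial>lborel) = indicator {0..T} s * (h s * (LINT t:{0..s}|lborel. g t))" for s
  proof -
    have "(\<lambda>t. f t s) = (\<lambda>t. (indicator {0..T} s * h s) * (indicator {0..s} t * g t))"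
      by (auto simp: f_def indicator_def fun_eq_iff)
    then show ?thesis unfolding set_lebesgue_integral_def by simp
  qed
  show ?thesis using F unfolding L R set_lebesgue_integral_def by simp
qed




lemma nrm_cong: "(\<And>c. c \<in> coords m \<Longrightarrow> v c = w c) \<Longrightarrow> nrm m v = nrm m w"
  unfolding nrm_def by (rule sum.cong) auto

lemma nrm_tri: "nrm m (\<lambda>c. a c - b c) \<le> nrm m (\<lambda>c. a c - e c) + nrm m (\<lambda>c. e c - b c)"
  unfolding nrm_def sum.distrib[symmetric] by (rule sum_mono) linarith

lemma nrm_zero[simp]: "nrm m (\<lambda>c. 0) = 0"
  unfolding nrm_def by simp

lemma sint_sum:
  fixes f :: "'i \<Rightarrow> real \<Rightarrow> real"
  assumes "finite I" "\<And>i. i \<in> I \<Longrightarrow> set_integrable lborel A (f i)"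
  shows "set_integrable lborel A (\<lambda>s. \<Sum>i\<in>I. f i s) \<and> (LINT s:A|lborel. (\<Sum>i\<in>I. f i s)) = (\<Sum>i\<in>I. LINT s:A|lborel. f i s)"
  using assms
proof (induction I rule: finite_induct)
  case empty then show ?case by (simp add: set_integrable_def)
next
  case (insert a I)
  then have ia: "set_integrable lborel A (f a)" and iI: "set_integrable lborel A (\<lambda>s. \<Sum>i\<in>I. f i s)"
    and eI: "(LINT s:A|lborel. (\<Sum>i\<in>I. f i s)) = (\<Sum>i\<in>I. LINT s:A|lborel. f i s)" by auto
  show ?case using insert(1,2) set_integral_add[OF ia iI] eI by simp
qed

lemma key_step:
  fixes G :: "real \<Rightarrow> (coord \<Rightarrow> real) \<Rightarrow> coord \<Rightarrow> real"
  assumes iv: "\<And>c. c \<in> coords m \<Longrightarrow> set_integrable lborel A (\<lambda>s. G s (v s) c)"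
    and iw: "\<And>c. c \<in> coords m \<Longrightarrow> set_integrable lborel A (\<lambda>s. G s (w s) c)"
    and inrm: "set_integrable lborel A (\<lambda>s. nrm m (\<lambda>c. v s c - w s c))"
    and lip: "\<And>s v w. nrm m (\<lambda>c. G s v c - G s w c) \<le> K * nrm m (\<lambda>c. v c - w c)"
  shows "nrm m (\<lambda>c. (LINT s:A|lborel. G s (v s) c) - (LINT s:A|lborel. G s (w s) c))
      \<le> K * (LINT s:A|lborel. nrm m (\<lambda>c. v s c - w s c))"
proof -
  have idiff: "set_integrable lborel A (\<lambda>s. G s (v s) c - G s (w s) c)" if "c \<in> coords m" for c
    using iv[OF that] iw[OF that] by auto
  have iabs: "\<And>c. c \<in> coords m \<Longrightarrow> set_integrable lborel A (\<lambda>s. \<bar>G s (v s) c - G s (w s) c\<bar>)"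
    using idiff set_integrable_abs by blast
  note ss = sint_sum[where I="coords m" and f="\<lambda>c s. \<bar>G s (v s) c - G s (w s) c\<bar>" and A=A, OF finite_coords iabs]
  have "nrm m (\<lambda>c. (LINT s:A|lborel. G s (v s) c) - (LINT s:A|lborel. G s (w s) c))
      = (\<Sum>c\<in>coords m. \<bar>LINT s:A|lborel. G s (v s) c - G s (w s) c\<bar>)"
    unfolding nrm_def by (rule sum.cong) (use iv iw in auto)
  also have "\<dots> \<le> (\<Sum>c\<in>coords m. LINT s:A|lborel. \<bar>G s (v s) c - G s (w s) c\<bar>)"
    by (rule sum_mono) (rule sint_abs_le[OF idiff])
  also have "\<dots> = (LINT s:A|lborel. nrm m (\<lambda>c. G s (v s) c - G s (w s) c))"
    unfolding nrm_def using ss by simp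
  also have "\<dots> \<le> (LINT s:A|lborel. K * nrm m (\<lambda>c. v s c - w s c))"
  proof (rule set_integral_mono)
    show "set_integrable lborel A (\<lambda>s. nrm m (\<lambda>c. G s (v s) c - G s (w s) c))"
      unfolding nrm_def using ss by simp
    show "set_integrable lborel A (\<lambda>s. K * nrm m (\<lambda>c. v s c - w s c))" using inrm by auto
  qed (rule lip)
  also have "\<dots> = K * (LINT s:A|lborel. nrm m (\<lambda>c. v s c - w s c))" by simp
  finally show ?thesis .
qed

lemma exp_partial_le:
  fixes x :: real
  assumes "0 \<le> x"
  shows "(\<Sum>k<N. x ^ k / fact k) \<le> exp x"
proof -
  have s: "(\<lambda>k. x ^ k / fact k) sums exp x" using exp_converges[of x] by (simp add: scaleR_conv_of_real divide_inverse mult.commute)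
  show ?thesis using sum_le_suminf[OF sums_summable[OF s], of "{..<N}"] sums_unique[OF s] assms by auto
qed

lemma exp_partial_lim:
  fixes x :: real
  shows "(\<lambda>n. (\<Sum>k<n. x ^ k / fact k)) \<longlonglongrightarrow> exp x"
proof -
  have s: "(\<lambda>k. x ^ k / fact k) sums exp x" using exp_converges[of x] by (simp add: scaleR_conv_of_real divide_inverse mult.commute)
  then show ?thesis unfolding sums_def .
qed

lemma picard:
  fixes G :: "real \<Rightarrow> (coord \<Rightarrow> real) \<Rightarrow> coord \<Rightarrow> real" and T K a Mb :: real
  assumes T: "0 \<le> T" and K: "0 \<le> K"
    and meas: "\<And>v c. (\<And>c'. c' \<in> coords m \<Longrightarrow> (\<lambda>s. v s c') \<in> borel_measurable lborel) \<Longrightarrow> c \<in> coords m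
        \<Longrightarrow> (\<lambda>s. G s (v s) c) \<in> borel_measurable lborel"
    and bnd: "\<And>s v c. c \<in> coords m \<Longrightarrow> \<bar>G s v c\<bar> \<le> Mb"
    and lip: "\<And>s v w. nrm m (\<lambda>c. G s v c - G s w c) \<le> K * nrm m (\<lambda>c. v c - w c)"
    and a0: "\<And>t. t \<in> {0..T} \<Longrightarrow> nrm m (\<lambda>c. LINT s:{0..t}|lborel. G s (\<lambda>_. 0) c) \<le> a"
  shows "\<exists>d. (\<forall>t c. c \<notin> coords m \<longrightarrow> d t c = 0) \<and> (\<forall>c\<in>coords m. (\<lambda>s. d s c) \<in> borel_measurable lborel)
     \<and> (\<forall>c\<in>coords m. \<forall>t\<in>{0..T}. d t c = (LINT s:{0..t}|lborel. G s (d s) c))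
     \<and> (\<forall>t\<in>{0..T}. nrm m (d t) \<le> a * exp (K * T))"
proof -
  have a_nn: "0 \<le> a" using a0[of 0] T nrm_nonneg[of m] by (meson atLeastAtMost_iff order.refl order_trans)
  have Gint: "set_integrable lborel {0..t} (\<lambda>s. G s (v s) c)"
    if "\<And>c'. c' \<in> coords m \<Longrightarrow> (\<lambda>s. v s c') \<in> borel_measurable lborel" "c \<in> coords m" for v c t
    by (rule sint_bdd[where A="{0..t}" and a=0 and b=t and M=Mb], rule meas[OF that]) (use bnd that(2) in auto)
  define dn :: "nat \<Rightarrow> real \<Rightarrow> coord \<Rightarrow> real" where
    "dn = rec_nat (\<lambda>t c. 0) (\<lambda>k dp t c. if c \<in> coords m then LINT s:{0..t}|lborel. G s (dp s) c else 0)"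
  have dn0: "dn 0 = (\<lambda>t c. 0)" by (simp add: dn_def)
  have dnS: "dn (Suc n) = (\<lambda>t c. if c \<in> coords m then LINT s:{0..t}|lborel. G s (dn n s) c else 0)" for n
    unfolding dn_def by simp
  have dn_out: "c \<notin> coords m \<Longrightarrow> dn n t c = 0" for n t c by (cases n) (simp_all add: dn0 dnS)
  have dn_meas: "c \<in> coords m \<Longrightarrow> (\<lambda>s. dn n s c) \<in> borel_measurable lborel" for n c
  proof (induction n arbitrary: c)
    case 0 then show ?case by (simp add: dn0)
  next
    case (Suc n)
    have "(\<lambda>t. LINT s:{0..t}|lborel. G s (dn n s) c) \<in> borel_measurable lborel"
      by (rule meas_indef[OF meas]) (use Suc in auto)
    then show ?case using Suc.prems by (simp add: dnS)
  qed
  define E where "E k = (K * T) ^ k / fact k" for k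
  have E_nn: "0 \<le> E k" for k unfolding E_def using K T by simp
  have diff: "nrm m (\<lambda>c. dn (Suc n) t c - dn n t c) \<le> a * (K * t) ^ n / fact n" if "t \<in> {0..T}" for n t
    using that
  proof (induction n arbitrary: t)
    case 0
    have "nrm m (\<lambda>c. dn (Suc 0) t c - dn 0 t c) = nrm m (\<lambda>c. LINT s:{0..t}|lborel. G s (\<lambda>_. 0) c)"
      by (rule nrm_cong) (simp add: dnS dn0)
    also have "\<dots> \<le> a" using a0[OF 0(1)] .
    finally show ?case by simp
  next
    case (Suc n)
    have t: "0 \<le> t" "t \<le> T" using Suc.prems by auto
    have bnd_n: "\<bar>nrm m (\<lambda>c. dn (Suc n) s c - dn n s c)\<bar> \<le> a * (K * T) ^ n / fact n" if "s \<in> {0..t}" for s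
    proof -
      have "nrm m (\<lambda>c. dn (Suc n) s c - dn n s c) \<le> a * (K * s) ^ n / fact n" using Suc.IH[of s] that t by auto
      also have "\<dots> \<le> a * (K * T) ^ n / fact n"
        using that t K a_nn by (auto intro!: divide_right_mono mult_left_mono power_mono mult_left_mono)
      finally show ?thesis using nrm_nonneg by (simp add: abs_of_nonneg nrm_nonneg)
    qed
    have mnrm: "(\<lambda>s. nrm m (\<lambda>c. dn (Suc n) s c - dn n s c)) \<in> borel_measurable lborel"
      unfolding nrm_def using dn_meas by (intro borel_measurable_sum borel_measurable_abs borel_measurable_diff) auto
    have inrm: "set_integrable lborel {0..t} (\<lambda>s. nrm m (\<lambda>c. dn (Suc n) s c - dn n s c))"
      by (rule sint_bdd[OF mnrm _ order.refl bnd_n]) simp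
    have ipow: "set_integrable lborel {0..t} (\<lambda>s. a * (K * s) ^ n / fact n)"
      by (rule sint_bdd[where M="a * (K * T) ^ n / fact n"]) (use t K a_nn in \<open>auto intro!: divide_right_mono mult_left_mono power_mono\<close>)
    have "nrm m (\<lambda>c. dn (Suc (Suc n)) t c - dn (Suc n) t c)
        = nrm m (\<lambda>c. (LINT s:{0..t}|lborel. G s (dn (Suc n) s) c) - (LINT s:{0..t}|lborel. G s (dn n s) c))"
      by (rule nrm_cong) (simp add: dnS)
    also have "\<dots> \<le> K * (LINT s:{0..t}|lborel. nrm m (\<lambda>c. dn (Suc n) s c - dn n s c))"
      by (rule key_step[OF Gint Gint inrm lip]) (use dn_meas in auto)
    also have "\<dots> \<le> K * (LINT s:{0..t}|lborel. a * (K * s) ^ n / fact n)"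
      by (intro mult_left_mono K set_integral_mono[OF inrm ipow]) (use Suc.IH t in auto)
    also have "(LINT s:{0..t}|lborel. a * (K * s) ^ n / fact n) = a * K ^ n / fact n * (LINT s:{0..t}|lborel. s ^ n)"
      by (simp add: power_mult_distrib)
    also have "\<dots> = a * K ^ n / fact n * (t ^ Suc n / Suc n)" using LINT_pow[OF t(1)] by simp
    also have "K * (a * K ^ n / fact n * (t ^ Suc n / Suc n)) = a * (K * t) ^ Suc n / fact (Suc n)"
      by (simp add: power_mult_distrib field_simps)
    finally show ?case .
  qed
  have tele: "nrm m (\<lambda>c. dn N t c - dn n t c) \<le> a * (\<Sum>k\<in>{n..<N}. E k)" if "t \<in> {0..T}" "n \<le> N" for n N t
    using that(2)
  proof (induction N rule: dec_induct)
    case base then show ?case by simp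
  next
    case (step N)
    have "nrm m (\<lambda>c. dn (Suc N) t c - dn n t c) \<le> nrm m (\<lambda>c. dn (Suc N) t c - dn N t c) + nrm m (\<lambda>c. dn N t c - dn n t c)"
      by (rule nrm_tri)
    also have "nrm m (\<lambda>c. dn (Suc N) t c - dn N t c) \<le> a * E N"
    proof -
      have "nrm m (\<lambda>c. dn (Suc N) t c - dn N t c) \<le> a * (K * t) ^ N / fact N" by (rule diff[OF that(1)])
      also have "\<dots> \<le> a * E N" unfolding E_def
        using that K a_nn by (auto intro!: divide_right_mono mult_left_mono power_mono)
      finally show ?thesis .
    qed
    finally show ?case using step.IH step.hyps by (simp add: algebra_simps)
  qed
  define eps where "eps n = a * (exp (K * T) - (\<Sum>k<n. E k))" for n
  have eps_lim: "eps \<longlonglongrightarrow> 0"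
  proof -
    have "(\<lambda>n. a * (exp (K * T) - (\<Sum>k<n. E k))) \<longlonglongrightarrow> a * (exp (K * T) - exp (K * T))"
      unfolding E_def by (intro tendsto_intros exp_partial_lim)
    moreover have "eps = (\<lambda>n. a * (exp (K * T) - (\<Sum>k<n. E k)))" by (rule ext) (simp add: eps_def)
    ultimately show ?thesis by simp
  qed
  have sumE: "(\<Sum>k\<in>{n..<N}. E k) \<le> exp (K * T) - (\<Sum>k<n. E k)" if "n \<le> N" for n N
  proof -
    have "(\<Sum>k<N. E k) = (\<Sum>k<n. E k) + (\<Sum>k\<in>{n..<N}. E k)"
      using that by (metis atLeast0LessThan sum.atLeastLessThan_concat zero_le)
    moreover have "(\<Sum>k<N. E k) \<le> exp (K * T)" unfolding E_def by (rule exp_partial_le) (use K T in simp)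
    ultimately show ?thesis by simp
  qed
  have cauchy_bd: "nrm m (\<lambda>c. dn N t c - dn n t c) \<le> eps n" if "t \<in> {0..T}" "n \<le> N" for n N t
    using tele[OF that] sumE[OF that(2)] a_nn unfolding eps_def by (meson mult_left_mono order_trans)
  have conv: "convergent (\<lambda>n. dn n t c)" if "t \<in> {0..T}" for t c
  proof (cases "c \<in> coords m")
    case False then show ?thesis by (simp add: dn_out convergent_const)
  next
    case True
    show ?thesis unfolding Cauchy_convergent_iff[symmetric]
    proof (rule CauchyI)
      fix e :: real assume e: "0 < e"
      obtain M where M: "\<forall>n\<ge>M. \<bar>eps n - 0\<bar> < e / 2"
        using eps_lim[unfolded LIMSEQ_def] e by (metis dist_real_def half_gt_zero)
      show "\<exists>M. \<forall>ma\<ge>M. \<forall>n\<ge>M. norm (dn ma t c - dn n t c) < e"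
      proof (intro exI[of _ M] allI impI)
        fix n1 n2 assume n: "M \<le> n1" "M \<le> n2"
        have "\<bar>dn n1 t c - dn M t c\<bar> \<le> eps M"
          using nrm_ge[OF True, of "\<lambda>c. dn n1 t c - dn M t c"] cauchy_bd[OF that n(1)] by simp
        moreover have "\<bar>dn n2 t c - dn M t c\<bar> \<le> eps M"
          using nrm_ge[OF True, of "\<lambda>c. dn n2 t c - dn M t c"] cauchy_bd[OF that n(2)] by simp
        moreover have "eps M < e / 2" using M by auto
        ultimately show "norm (dn n1 t c - dn n2 t c) < e" by simp
      qed
    qed
  qed
  define d where "d t c = lim (\<lambda>n. dn n t c)" for t c
  have d_lim: "(\<lambda>n. dn n t c) \<longlonglongrightarrow> d t c" if "t \<in> {0..T}" for t c
    using conv[OF that] unfolding d_def by (simp add: convergent_LIMSEQ_iff)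
  have d_out: "c \<notin> coords m \<Longrightarrow> d t c = 0" for t c unfolding d_def by (simp add: dn_out)
  have d_meas: "c \<in> coords m \<Longrightarrow> (\<lambda>s. d s c) \<in> borel_measurable lborel" for c
    unfolding d_def by (rule borel_measurable_lim_metric) (rule dn_meas)
  have tail: "nrm m (\<lambda>c. d t c - dn n t c) \<le> eps n" if "t \<in> {0..T}" for t n
  proof (rule LIMSEQ_le_const2)
    show "(\<lambda>N. nrm m (\<lambda>c. dn N t c - dn n t c)) \<longlonglongrightarrow> nrm m (\<lambda>c. d t c - dn n t c)"
      unfolding nrm_def by (intro tendsto_intros d_lim[OF that])
    show "\<exists>N. \<forall>N'\<ge>N. nrm m (\<lambda>c. dn N' t c - dn n t c) \<le> eps n"
      using cauchy_bd[OF that] by blast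
  qed
  have eqn: "d t c = (LINT s:{0..t}|lborel. G s (d s) c)" if t: "t \<in> {0..T}" and c: "c \<in> coords m" for t c
  proof -
    have t0: "0 \<le> t" using t by auto
    have l1: "(\<lambda>n. dn (Suc n) t c) \<longlonglongrightarrow> d t c" using d_lim[OF t] by (rule LIMSEQ_Suc)
    have l2: "(\<lambda>n. dn (Suc n) t c) \<longlonglongrightarrow> (LINT s:{0..t}|lborel. G s (d s) c)"
    proof -
      have bound: "\<bar>dn (Suc n) t c - (LINT s:{0..t}|lborel. G s (d s) c)\<bar> \<le> K * (eps n * t)" for n
      proof -
        have mn: "(\<lambda>s. nrm m (\<lambda>c. dn n s c - d s c)) \<in> borel_measurable lborel"
          unfolding nrm_def using dn_meas d_meas by (intro borel_measurable_sum borel_measurable_abs borel_measurable_diff) auto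
        have bn: "\<bar>nrm m (\<lambda>c. dn n s c - d s c)\<bar> \<le> eps n" if "s \<in> {0..t}" for s
        proof -
          have "nrm m (\<lambda>c. dn n s c - d s c) = nrm m (\<lambda>c. d s c - dn n s c)"
            unfolding nrm_def by (simp add: abs_minus_commute)
          then show ?thesis using tail[of s n] that t by (simp add: nrm_nonneg)
        qed
        have inrm: "set_integrable lborel {0..t} (\<lambda>s. nrm m (\<lambda>c. dn n s c - d s c))"
          by (rule sint_bdd[OF mn _ order.refl bn]) simp
        have "\<bar>dn (Suc n) t c - (LINT s:{0..t}|lborel. G s (d s) c)\<bar>
            \<le> nrm m (\<lambda>c. (LINT s:{0..t}|lborel. G s (dn n s) c) - (LINT s:{0..t}|lborel. G s (d s) c))"
          using nrm_ge[OF c, of "\<lambda>c. (LINT s:{0..t}|lborel. G s (dn n s) c) - (LINT s:{0..t}|lborel. G s (d s) c)"] c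
          by (simp add: dnS)
        also have "\<dots> \<le> K * (LINT s:{0..t}|lborel. nrm m (\<lambda>c. dn n s c - d s c))"
          by (rule key_step[OF Gint Gint inrm lip]) (use dn_meas d_meas in auto)
        also have "(LINT s:{0..t}|lborel. nrm m (\<lambda>c. dn n s c - d s c)) \<le> eps n * measure lborel {0..t}"
          by (rule sint_le_const[OF inrm]) (use bn t0 in \<open>auto dest!: abs_le_D1\<close>)
        also have "measure lborel {0..t} = t" using t0 by simp
        finally show ?thesis using K by (simp add: mult_left_mono)
      qed
      have "(\<lambda>n. K * (eps n * t)) \<longlonglongrightarrow> K * (0 * t)" by (intro tendsto_intros eps_lim)
      then have "(\<lambda>n. K * (eps n * t)) \<longlonglongrightarrow> 0" by simp
      then have "(\<lambda>n. dn (Suc n) t c - (LINT s:{0..t}|lborel. G s (d s) c)) \<longlonglongrightarrow> 0"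
        by (rule Lim_null_comparison[rotated]) (use bound in \<open>auto intro!: always_eventually\<close>)
      then show ?thesis by (simp add: LIM_zero_iff)
    qed
    show ?thesis using LIMSEQ_unique[OF l1 l2] .
  qed
  have dbound: "nrm m (d t) \<le> a * exp (K * T)" if "t \<in> {0..T}" for t
    using tail[OF that, of 0] by (simp add: dn0 eps_def)
  show ?thesis
    by (rule exI[of _ d]) (use d_out d_meas eqn dbound in auto)
qed




lemma meas_rhs:
  assumes X: "\<And>c'. c' \<in> coords m \<Longrightarrow> (\<lambda>s. X s c') \<in> borel_measurable lborel"
    and U: "\<And>k. (\<lambda>s. U s k) \<in> borel_measurable lborel" and c: "c \<in> coords m"
  shows "(\<lambda>s. rhs p m (U s) (X s) c) \<in> borel_measurable lborel"
proof -
  note X' = X[unfolded measurable_lborel2] and U' = U[unfolded measurable_lborel2]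
  show ?thesis unfolding measurable_lborel2
    using c by (cases c) (auto intro!: borel_measurable_sum borel_measurable_add borel_measurable_diff
      borel_measurable_times borel_measurable_uminus borel_measurable_divide borel_measurable_const X' U')
qed

lemma meas_rc:
  assumes X: "\<And>c'. c' \<in> coords m \<Longrightarrow> (\<lambda>s. X s c') \<in> borel_measurable lborel"
    and U: "\<And>k. (\<lambda>s. U s k) \<in> borel_measurable lborel" and mc: "mc \<le> m"
  shows "(\<lambda>s. running_cost p mc (X s) (U s)) \<in> borel_measurable lborel"
proof -
  note X' = X[unfolded measurable_lborel2] and U' = U[unfolded measurable_lborel2]
  show ?thesis unfolding running_cost_def measurable_lborel2 using mc
    by (auto intro!: borel_measurable_sum borel_measurable_add borel_measurable_diff borel_measurable_power
      borel_measurable_times borel_measurable_uminus borel_measurable_divide borel_measurable_const X' U')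
qed

definition hu :: "params \<Rightarrow> nat \<Rightarrow> nat \<Rightarrow> (coord \<Rightarrow> real) \<Rightarrow> (cidx \<Rightarrow> real) \<Rightarrow> (coord \<Rightarrow> real) \<Rightarrow> real" where
  "hu p m mc x u lam = A_a p * (u Ua)^2 + A_s p * (u Us)^2 + A_k p * (u Uk)^2 + (\<Sum>j=1..mc. A_j p j * (u (Uj j))^2)
     - (lam CE * x CE + lam CL * x CL) * u Ua - (lam CSs * x CSs + lam CSi * x CSi) * u Us
     - alpha_s p * lam CSs * (x CSs + x CSi)^2 / kappa_s p * u Uk
     - (\<Sum>j=1..m. lam (CMi j) * x (CMi j) * u (Uj j))"

lemma ham_hu: "hamiltonian p m mc x u lam - hu p m mc x u lam = hamiltonian p m mc x v lam - hu p m mc x v lam"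
  unfolding hamiltonian_def running_cost_def hu_def sum_coords
  by (simp add: algebra_simps sum.distrib sum_subtractf divide_inverse power2_eq_square)

lemma proj_ineq:
  fixes a c U v :: real
  assumes a: "0 < a" and U: "0 \<le> U" and v: "0 \<le> v" "v \<le> U"
  shows "a * (v - max 0 (min (c / (2 * a)) U))^2 \<le> (a * v^2 - c * v) - (a * (max 0 (min (c / (2 * a)) U))^2 - c * max 0 (min (c / (2 * a)) U))"
proof -
  define w where "w = max 0 (min (c / (2 * a)) U)"
  have key: "(a * v^2 - c * v) - (a * w^2 - c * w) - a * (v - w)^2 = (v - w) * (2 * a * w - c)"
    by (simp add: algebra_simps power2_eq_square)
  have "0 \<le> (v - w) * (2 * a * w - c)"
  proof (cases "c / (2 * a) \<le> 0")
    case True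
    then have "c \<le> 0" using a by (simp add: divide_le_0_iff)
    then have "w = 0" using True U unfolding w_def by linarith
    then show ?thesis using v \<open>c \<le> 0\<close> by (simp add: mult_nonneg_nonpos)
  next
    case False
    show ?thesis
    proof (cases "c / (2 * a) \<le> U")
      case True
      then have "w = c / (2 * a)" using False by (simp add: w_def)
      then have "2 * a * w - c = 0" using a by simp
      then show ?thesis by simp
    next
      case False2: False
      then have w: "w = U" using False U by (simp add: w_def)
      have "U < c / (2 * a)" using False2 by simp
      then have "2 * a * U < c" using a by (simp add: field_simps)
      then show ?thesis using w v by (intro mult_nonpos_nonpos) auto
    qed
  qed
  then show ?thesis using key unfolding w_def by linarith
qed

lemma sum_CMi_le: "mc \<le> m \<Longrightarrow> (\<Sum>j=1..mc. \<bar>v (CMi j)\<bar>) \<le> nrm m v"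
proof -
  assume mc: "mc \<le> m"
  have "(\<Sum>j=1..mc. \<bar>v (CMi j)\<bar>) = (\<Sum>c\<in>CMi ` {1..mc}. \<bar>v c\<bar>)"
    by (subst sum.reindex) (auto simp: inj_on_def)
  also have "\<dots> \<le> (\<Sum>c\<in>coords m. \<bar>v c\<bar>)"
    by (rule sum_mono2) (use mc in auto)
  finally show ?thesis unfolding nrm_def .
qed

lemma Dh_bound:
  assumes mc: "mc \<le> m"
  shows "\<exists>K\<ge>0. \<forall>x u lam v. okx m R U x u \<longrightarrow> (\<forall>c\<in>coords m. \<bar>lam c\<bar> \<le> L) \<longrightarrow>
      \<bar>Dh p m mc u lam x v\<bar> \<le> K * nrm m v"
proof -
  obtain K0 where K0: "\<forall>c\<in>coords m. \<forall>z. okx m R U (fst z) (fst (snd z)) \<longrightarrow>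
    \<bar>Df p m (fst (snd z)) (fst z) (snd (snd z)) c\<bar> \<le> K0 * nrm m (snd (snd z))"
    using Df_bnd by blast
  define K where "K = 1 + card (coords m) * (\<bar>L\<bar> * \<bar>K0\<bar>)"
  have "K \<ge> 0" unfolding K_def by simp
  moreover have "\<bar>Dh p m mc u lam x v\<bar> \<le> K * nrm m v"
    if ok: "okx m R U x u" and lb: "\<forall>c\<in>coords m. \<bar>lam c\<bar> \<le> L" for x u lam v
  proof -
    have t1: "\<bar>\<Sum>j=1..mc. v (CMi j)\<bar> \<le> nrm m v"
      using sum_abs[of "\<lambda>j. v (CMi j)" "{1..mc}"] sum_CMi_le[OF mc, of v] by linarith
    have t2: "\<bar>lam c * Df p m u x v c\<bar> \<le> \<bar>L\<bar> * \<bar>K0\<bar> * nrm m v" if c: "c \<in> coords m" for c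
    proof -
      have a: "\<bar>lam c\<bar> \<le> \<bar>L\<bar>" using lb c by force
      have b: "\<bar>Df p m u x v c\<bar> \<le> \<bar>K0\<bar> * nrm m v"
        using K0[rule_format, OF c, of "(x, u, v)"] ok nrm_nonneg[of m v]
        by (simp add: order_trans[OF _ mult_right_mono[OF abs_ge_self]])
      show ?thesis unfolding abs_mult mult.assoc by (rule mult_mono[OF a b]) auto
    qed
    have "\<bar>\<Sum>c\<in>coords m. lam c * Df p m u x v c\<bar> \<le> (\<Sum>c\<in>coords m. \<bar>L\<bar> * \<bar>K0\<bar> * nrm m v)"
      using sum_abs[of "\<lambda>c. lam c * Df p m u x v c" "coords m"] sum_mono[of "coords m" "\<lambda>c. \<bar>lam c * Df p m u x v c\<bar>", OF t2]
      by linarith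
    also have "\<dots> = card (coords m) * (\<bar>L\<bar> * \<bar>K0\<bar>) * nrm m v" by simp
    finally show ?thesis unfolding Dh_def K_def using t1 by (simp add: algebra_simps abs_triangle_ineq[THEN order_trans])
  qed
  ultimately show ?thesis by blast
qed

lemma Qh_bound:
  shows "\<exists>K\<ge>0. \<forall>x u lam v. okx m R U x u \<longrightarrow> (\<forall>c\<in>coords m. \<bar>lam c\<bar> \<le> L) \<longrightarrow>
      \<bar>Qh p m u lam v\<bar> \<le> K * (nrm m v)^2"
proof -
  obtain K0 where K0: "\<forall>c\<in>coords m. \<forall>z. okx m R U (fst z) (fst (snd z)) \<longrightarrow>
    \<bar>Qf p m (fst (snd z)) (snd (snd z)) c\<bar> \<le> K0 * (nrm m (snd (snd z)))^2"
    using Qf_bnd by blast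
  define K where "K = card (coords m) * (\<bar>L\<bar> * \<bar>K0\<bar>)"
  have "K \<ge> 0" unfolding K_def by simp
  moreover have "\<bar>Qh p m u lam v\<bar> \<le> K * (nrm m v)^2"
    if ok: "okx m R U x u" and lb: "\<forall>c\<in>coords m. \<bar>lam c\<bar> \<le> L" for x u lam v
  proof -
    have t2: "\<bar>lam c * Qf p m u v c\<bar> \<le> \<bar>L\<bar> * \<bar>K0\<bar> * (nrm m v)^2" if c: "c \<in> coords m" for c
    proof -
      have a: "\<bar>lam c\<bar> \<le> \<bar>L\<bar>" using lb c by force
      have b: "\<bar>Qf p m u v c\<bar> \<le> \<bar>K0\<bar> * (nrm m v)^2"
        using K0[rule_format, OF c, of "(x, u, v)"] ok
        by (simp add: order_trans[OF _ mult_right_mono[OF abs_ge_self]])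
      show ?thesis unfolding abs_mult mult.assoc by (rule mult_mono[OF a b]) auto
    qed
    have "\<bar>\<Sum>c\<in>coords m. lam c * Qf p m u v c\<bar> \<le> (\<Sum>c\<in>coords m. \<bar>L\<bar> * \<bar>K0\<bar> * (nrm m v)^2)"
      using sum_abs[of "\<lambda>c. lam c * Qf p m u v c" "coords m"] sum_mono[of "coords m" "\<lambda>c. \<bar>lam c * Qf p m u v c\<bar>", OF t2]
      by linarith
    also have "\<dots> = K * (nrm m v)^2" by (simp add: K_def)
    finally show ?thesis unfolding Qh_def .
  qed
  ultimately show ?thesis by blast
qed




lemma abs_LINT_le_int:
  fixes f :: "real \<Rightarrow> real"
  assumes "integrable lborel f" "A \<in> sets lborel"
  shows "\<bar>LINT s:A|lborel. f s\<bar> \<le> (\<integral>s. \<bar>f s\<bar> \<partial>lborel)"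
  unfolding set_lebesgue_integral_def
proof (rule integral_abs_bound_integral)
  show "integrable lborel (\<lambda>x. indicator A x *\<^sub>R f x)" using assms by (intro integrable_mult_indicator) auto
qed (use assms in \<open>auto simp: indicator_def\<close>)

locale setting =
  fixes p :: params and m mc :: nat and T :: real and x0 :: "coord \<Rightarrow> real"
    and ustar :: "real \<Rightarrow> cidx \<Rightarrow> real" and x lam :: "real \<Rightarrow> coord \<Rightarrow> real"
  assumes m1: "m \<ge> 1" and mc1: "1 \<le> mc" and mcm: "mc \<le> m" and Tpos: "T > 0"
    and pos: "pos_params p m mc" and adm: "admissible p mc T ustar" and sol: "state_sol p m T x0 ustar x"
    and opt: "\<forall>u y. admissible p mc T u \<and> state_sol p m T x0 u y \<longrightarrow> cost_J p mc T x ustar \<le> cost_J p mc T y u"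
    and adj: "adjoint_sol p m mc T ustar x lam"
begin

definition fx where "fx c s = indicator {0..T} s * rhs p m (ustar s) (x s) c"
definition hc where "hc c s = dH_dx p m mc c (x s) (ustar s) (lam s)"
definition hb where "hb c s = indicator {0..T} s * hc c s"
definition xb where "xb s c = indicator {0..T} s * x s c"
definition ub where "ub s k = indicator {0..T} s * ustar s k"
definition lb where "lb s c = indicator {0..T} s * lam s c"

lemma ub_meas: "(\<lambda>s. ub s k) \<in> borel_measurable lborel"
  using adm unfolding admissible_def set_borel_measurable_def ub_def by auto

lemma u_box: assumes "t \<in> {0..T}"
  shows "0 \<le> ustar t Ua" "ustar t Ua \<le> uAmax p" "0 \<le> ustar t Us" "ustar t Us \<le> uSmax p"
    "0 \<le> ustar t Uk" "ustar t Uk \<le> uKmax p"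
    "\<And>j. j \<in> {1..mc} \<Longrightarrow> 0 \<le> ustar t (Uj j) \<and> ustar t (Uj j) \<le> uMmax p j"
    "\<And>j. j \<notin> {1..mc} \<Longrightarrow> ustar t (Uj j) = 0"
  using adm assms unfolding admissible_def by auto

lemma fx_int: "c \<in> coords m \<Longrightarrow> integrable lborel (fx c)"
proof -
  assume c: "c \<in> coords m"
  have "set_integrable lborel {0..T} (\<lambda>s. rhs p m (ustar s) (x s) c)"
    using sol c Tpos unfolding state_sol_def by auto
  then show ?thesis unfolding set_integrable_def fx_def[abs_def] by simp
qed

lemma fx_meas: "c \<in> coords m \<Longrightarrow> fx c \<in> borel_measurable lborel"
  using fx_int borel_measurable_integrable by blast

lemma x0_eq: "c \<in> coords m \<Longrightarrow> x 0 c = x0 c"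
  using sol unfolding state_sol_def by auto

lemma x_eq: assumes c: "c \<in> coords m" and t: "t \<in> {0..T}"
  shows "x t c = x0 c + (LINT s:{0..t}|lborel. fx c s)"
proof -
  have "x t c - x 0 c = (LINT s:{0..t}|lborel. rhs p m (ustar s) (x s) c)"
    using sol c t unfolding state_sol_def by auto
  also have "\<dots> = (LINT s:{0..t}|lborel. fx c s)"
    by (rule set_lebesgue_integral_cong) (use t in \<open>auto simp: fx_def\<close>)
  finally show ?thesis using x0_eq[OF c] by simp
qed

lemma xb_eq: "c \<in> coords m \<Longrightarrow> xb s c = indicator {0..T} s * (x0 c + (LINT s:{0..s}|lborel. fx c s))"
  by (cases "s \<in> {0..T}") (auto simp: xb_def x_eq)

lemma xb_meas: "c \<in> coords m \<Longrightarrow> (\<lambda>s. xb s c) \<in> borel_measurable lborel"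
  unfolding xb_eq by (intro borel_measurable_times borel_measurable_add borel_measurable_const
      meas_indef fx_meas borel_measurable_indicator) auto

definition Bx where "Bx = (\<Sum>c\<in>coords m. \<bar>x0 c\<bar> + (\<integral>s. \<bar>fx c s\<bar> \<partial>lborel))"

lemma Bx_nn: "0 \<le> Bx"
  unfolding Bx_def by (intro sum_nonneg add_nonneg_nonneg integral_nonneg_AE) auto

lemma x_bound: assumes "c \<in> coords m" "t \<in> {0..T}" shows "\<bar>x t c\<bar> \<le> Bx"
proof -
  have "\<bar>x t c\<bar> \<le> \<bar>x0 c\<bar> + \<bar>LINT s:{0..t}|lborel. fx c s\<bar>" using x_eq[OF assms] by simp
  also have "\<dots> \<le> \<bar>x0 c\<bar> + (\<integral>s. \<bar>fx c s\<bar> \<partial>lborel)"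
    using abs_LINT_le_int[OF fx_int[OF assms(1)]] by simp
  also have "\<dots> \<le> Bx" unfolding Bx_def
    by (rule member_le_sum[where f="\<lambda>c. \<bar>x0 c\<bar> + (\<integral>s. \<bar>fx c s\<bar> \<partial>lborel)"])
       (use assms(1) in \<open>auto intro!: add_nonneg_nonneg integral_nonneg_AE\<close>)
  finally show ?thesis .
qed

lemma xb_bound: "c \<in> coords m \<Longrightarrow> \<bar>xb s c\<bar> \<le> Bx"
  using x_bound[of c s] Bx_nn by (cases "s \<in> {0..T}") (auto simp: xb_def)

definition Um where "Um = uAmax p + uSmax p + uKmax p + (\<Sum>j=1..mc. uMmax p j)"

lemma pos_facts: "0 < uAmax p" "0 < uSmax p" "0 < uKmax p" "\<And>j. j \<in> {1..mc} \<Longrightarrow> 0 < uMmax p j"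
  "0 < A_a p" "0 < A_s p" "0 < A_k p" "\<And>j. j \<in> {1..mc} \<Longrightarrow> 0 < A_j p j" "0 < kappa_s p" "0 < alpha_s p"
  using pos unfolding pos_params_def by auto

lemma Um_ge: "uAmax p \<le> Um" "uSmax p \<le> Um" "uKmax p \<le> Um" "\<And>j. j \<in> {1..mc} \<Longrightarrow> uMmax p j \<le> Um" "0 \<le> Um"
proof -
  have s: "0 \<le> (\<Sum>j=1..mc. uMmax p j)" by (intro sum_nonneg) (use pos_facts in \<open>auto simp: less_imp_le\<close>)
  show "uAmax p \<le> Um" "uSmax p \<le> Um" "uKmax p \<le> Um" "0 \<le> Um" unfolding Um_def using s pos_facts by auto
  fix j assume j: "j \<in> {1..mc}"
  have "uMmax p j \<le> (\<Sum>j=1..mc. uMmax p j)"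
    by (rule member_le_sum) (use j pos_facts in \<open>auto simp: less_imp_le\<close>)
  then show "uMmax p j \<le> Um" unfolding Um_def using pos_facts by linarith
qed

definition inbox where "inbox v \<longleftrightarrow> 0 \<le> v Ua \<and> v Ua \<le> uAmax p \<and> 0 \<le> v Us \<and> v Us \<le> uSmax p \<and>
        0 \<le> v Uk \<and> v Uk \<le> uKmax p \<and> (\<forall>j\<in>{1..mc}. 0 \<le> v (Uj j) \<and> v (Uj j) \<le> uMmax p j) \<and>
        (\<forall>j. j \<notin> {1..mc} \<longrightarrow> v (Uj j) = 0)"

lemma inbox_ustar: "t \<in> {0..T} \<Longrightarrow> inbox (ustar t)"
  using adm unfolding admissible_def inbox_def by auto

lemma inbox_okx: assumes "inbox v" "\<forall>c\<in>coords m. \<bar>z c\<bar> \<le> R" shows "okx m R Um z v"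
proof -
  have "\<bar>v (Uj j)\<bar> \<le> Um" if "j \<in> {1..m}" for j
  proof (cases "j \<in> {1..mc}")
    case True
    then have "0 \<le> v (Uj j)" "v (Uj j) \<le> uMmax p j" using assms(1) unfolding inbox_def by auto
    then show ?thesis using Um_ge(4)[OF True] by auto
  next
    case False then show ?thesis using assms(1) Um_ge(5) unfolding inbox_def by auto
  qed
  then show ?thesis using assms Um_ge unfolding okx_def inbox_def by auto
qed

lemma inbox_zero: "inbox (\<lambda>k. 0)"
  unfolding inbox_def using pos_facts by (auto simp: less_imp_le)

lemma ub_inbox: "inbox (ub s)"
proof (cases "s \<in> {0..T}")
  case True
  then have "ub s = ustar s" by (auto simp: ub_def)
  then show ?thesis using inbox_ustar[OF True] by simp
next
  case False
  then have "ub s = (\<lambda>k. 0)" by (auto simp: ub_def)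
  then show ?thesis using inbox_zero by simp
qed


lemma hb_int: "c \<in> coords m \<Longrightarrow> integrable lborel (hb c)"
proof -
  assume c: "c \<in> coords m"
  have "set_integrable lborel {0..T} (hc c)"
    using adj c Tpos unfolding adjoint_sol_def hc_def[abs_def] by auto
  then show ?thesis unfolding set_integrable_def hb_def[abs_def] by simp
qed

lemma hb_meas: "c \<in> coords m \<Longrightarrow> hb c \<in> borel_measurable lborel"
  using hb_int borel_measurable_integrable by blast

lemma lam_eq: assumes c: "c \<in> coords m" and t: "t \<in> {0..T}"
  shows "lam t c = (LINT s:{t..T}|lborel. hb c s)"
proof -
  have i: "set_integrable lborel {t..T} (hc c)" and e: "lam T c - lam t c = (LINT s:{t..T}|lborel. - hc c s)"
    and z: "lam T c = 0"
    using adj c t unfolding adjoint_sol_def hc_def[abs_def] by auto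
  have "lam t c = (LINT s:{t..T}|lborel. hc c s)" using e z set_integral_uminus[OF i] by simp
  also have "\<dots> = (LINT s:{t..T}|lborel. hb c s)"
    by (rule set_lebesgue_integral_cong) (use t in \<open>auto simp: hb_def\<close>)
  finally show ?thesis .
qed

lemma lb_eq: "c \<in> coords m \<Longrightarrow> lb s c = indicator {0..T} s * (LINT s:{s..T}|lborel. hb c s)"
  by (cases "s \<in> {0..T}") (auto simp: lb_def lam_eq)

lemma lb_meas: "c \<in> coords m \<Longrightarrow> (\<lambda>s. lb s c) \<in> borel_measurable lborel"
  unfolding lb_eq by (intro borel_measurable_times meas_indef2 hb_meas borel_measurable_indicator) auto

definition Bl where "Bl = (\<Sum>c\<in>coords m. (\<integral>s. \<bar>hb c s\<bar> \<partial>lborel))"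

lemma lam_bound: assumes "c \<in> coords m" "t \<in> {0..T}" shows "\<bar>lam t c\<bar> \<le> Bl"
proof -
  have "\<bar>lam t c\<bar> \<le> (\<integral>s. \<bar>hb c s\<bar> \<partial>lborel)"
    using lam_eq[OF assms] abs_LINT_le_int[OF hb_int[OF assms(1)]] by simp
  also have "\<dots> \<le> Bl" unfolding Bl_def
    by (rule member_le_sum[where f="\<lambda>c. (\<integral>s. \<bar>hb c s\<bar> \<partial>lborel)"])
       (use assms(1) in \<open>auto intro!: integral_nonneg_AE\<close>)
  finally show ?thesis .
qed

lemma Bl_nn: "0 \<le> Bl"
  unfolding Bl_def by (intro sum_nonneg integral_nonneg_AE) auto

lemma lb_bound: "c \<in> coords m \<Longrightarrow> \<bar>lb s c\<bar> \<le> Bl"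
  using lam_bound[of c s] Bl_nn by (cases "s \<in> {0..T}") (auto simp: lb_def)

lemma okx_x: "t \<in> {0..T} \<Longrightarrow> inbox v \<Longrightarrow> okx m (Bx + 1) Um (x t) v"
proof -
  assume t: "t \<in> {0..T}" and v: "inbox v"
  have "\<forall>c\<in>coords m. \<bar>x t c\<bar> \<le> Bx + 1"
  proof
    fix c assume "c \<in> coords m"
    then have "\<bar>x t c\<bar> \<le> Bx" using x_bound t by blast
    then show "\<bar>x t c\<bar> \<le> Bx + 1" by simp
  qed
  then show ?thesis by (rule inbox_okx[OF v])
qed

definition KDh where "KDh = (SOME K. K \<ge> 0 \<and> (\<forall>x u lam v. okx m (Bx + 1) Um x u \<longrightarrow> (\<forall>c\<in>coords m. \<bar>lam c\<bar> \<le> Bl) \<longrightarrow>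
      \<bar>Dh p m mc u lam x v\<bar> \<le> K * nrm m v))"

lemma KDh: "KDh \<ge> 0" "okx m (Bx + 1) Um z u \<Longrightarrow> (\<forall>c\<in>coords m. \<bar>l c\<bar> \<le> Bl) \<Longrightarrow>
      \<bar>Dh p m mc u l z v\<bar> \<le> KDh * nrm m v"
proof -
  have "\<exists>K. K \<ge> 0 \<and> (\<forall>x u lam v. okx m (Bx + 1) Um x u \<longrightarrow> (\<forall>c\<in>coords m. \<bar>lam c\<bar> \<le> Bl) \<longrightarrow>
      \<bar>Dh p m mc u lam x v\<bar> \<le> K * nrm m v)" using Dh_bound[OF mcm] by blast
  from someI_ex[OF this] show "KDh \<ge> 0" "okx m (Bx + 1) Um z u \<Longrightarrow> (\<forall>c\<in>coords m. \<bar>l c\<bar> \<le> Bl) \<Longrightarrow>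
      \<bar>Dh p m mc u l z v\<bar> \<le> KDh * nrm m v" unfolding KDh_def by blast+
qed

definition KQh where "KQh = (SOME K. K \<ge> 0 \<and> (\<forall>x u lam v. okx m (Bx + 1) Um x u \<longrightarrow> (\<forall>c\<in>coords m. \<bar>lam c\<bar> \<le> Bl) \<longrightarrow>
      \<bar>Qh p m u lam v\<bar> \<le> K * (nrm m v)^2))"

lemma KQh: "KQh \<ge> 0" "okx m (Bx + 1) Um z u \<Longrightarrow> (\<forall>c\<in>coords m. \<bar>l c\<bar> \<le> Bl) \<Longrightarrow>
      \<bar>Qh p m u l v\<bar> \<le> KQh * (nrm m v)^2"
proof -
  have "\<exists>K. K \<ge> 0 \<and> (\<forall>x u lam v. okx m (Bx + 1) Um x u \<longrightarrow> (\<forall>c\<in>coords m. \<bar>lam c\<bar> \<le> Bl) \<longrightarrow>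
      \<bar>Qh p m u lam v\<bar> \<le> K * (nrm m v)^2)" using Qh_bound by blast
  from someI_ex[OF this] show "KQh \<ge> 0" "okx m (Bx + 1) Um z u \<Longrightarrow> (\<forall>c\<in>coords m. \<bar>l c\<bar> \<le> Bl) \<Longrightarrow>
      \<bar>Qh p m u l v\<bar> \<le> KQh * (nrm m v)^2" unfolding KQh_def by blast+
qed

lemma nrm_ec: "c \<in> coords m \<Longrightarrow> nrm m (ec c) = 1"
  unfolding nrm_def ec_def by (simp add: sum.delta' if_distrib[of abs] cong: if_cong)

lemma hc_eq: "hc c s = Dh p m mc (ustar s) (lam s) (x s) (ec c)"
  unfolding hc_def dH_dx_eq ..

lemma hb_bound: "c \<in> coords m \<Longrightarrow> \<bar>hb c s\<bar> \<le> KDh"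
proof (cases "s \<in> {0..T}")
  case True
  assume c: "c \<in> coords m"
  have "\<bar>hc c s\<bar> \<le> KDh * nrm m (ec c)" unfolding hc_eq
    by (rule KDh(2)[OF okx_x[OF True inbox_ustar[OF True]]]) (use lam_bound True in auto)
  then show ?thesis using True c nrm_ec by (simp add: hb_def)
next
  case False then show ?thesis using KDh(1) by (simp add: hb_def)
qed

end



lemma meas_hu:
  assumes X: "\<And>c'. c' \<in> coords m \<Longrightarrow> (\<lambda>s. X s c') \<in> borel_measurable lborel"
    and L: "\<And>c'. c' \<in> coords m \<Longrightarrow> (\<lambda>s. L s c') \<in> borel_measurable lborel"
    and U: "\<And>k. (\<lambda>s. U s k) \<in> borel_measurable lborel" and mc: "mc \<le> m"
  shows "(\<lambda>s. hu p m mc (X s) (U s) (L s)) \<in> borel_measurable lborel"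
proof -
  note X' = X[unfolded measurable_lborel2] and U' = U[unfolded measurable_lborel2] and L' = L[unfolded measurable_lborel2]
  show ?thesis unfolding hu_def measurable_lborel2 using mc
    by (auto intro!: borel_measurable_sum borel_measurable_add borel_measurable_diff borel_measurable_power
      borel_measurable_times borel_measurable_uminus borel_measurable_divide borel_measurable_const X' U' L')
qed

context setting begin

definition Wf :: "(coord \<Rightarrow> real) \<Rightarrow> (coord \<Rightarrow> real) \<Rightarrow> (cidx \<Rightarrow> real) \<Rightarrow> cidx \<Rightarrow> real" where
  "Wf xv lv uv k = (case k of
      Ua \<Rightarrow> max 0 (min ((lv CE * xv CE + lv CL * xv CL) / (2 * A_a p)) (uAmax p))
    | Us \<Rightarrow> max 0 (min ((lv CSs * xv CSs + lv CSi * xv CSi) / (2 * A_s p)) (uSmax p))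
    | Uk \<Rightarrow> max 0 (min (alpha_s p * lv CSs * (xv CSs + xv CSi)\<^sup>2 / (2 * kappa_s p * A_k p)) (uKmax p))
    | Uj j \<Rightarrow> (if j \<in> {1..mc} then max 0 (min (lv (CMi j) * xv (CMi j) / (2 * A_j p j)) (uMmax p j)) else uv (Uj j)))"

lemma Wf_meas:
  assumes X: "\<And>c'. c' \<in> coords m \<Longrightarrow> (\<lambda>s. X s c') \<in> borel_measurable lborel"
    and L: "\<And>c'. c' \<in> coords m \<Longrightarrow> (\<lambda>s. L s c') \<in> borel_measurable lborel"
    and U: "\<And>k. (\<lambda>s. U s k) \<in> borel_measurable lborel"
  shows "(\<lambda>s. Wf (X s) (L s) (U s) k) \<in> borel_measurable lborel"
proof -
  note X' = X[unfolded measurable_lborel2] and U' = U[unfolded measurable_lborel2] and L' = L[unfolded measurable_lborel2]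
  show ?thesis
  proof (cases k)
    case (Uj j)
    show ?thesis
    proof (cases "j \<in> {1..mc}")
      case True
      then have "CMi j \<in> coords m" using mcm by auto
      then show ?thesis unfolding Uj Wf_def measurable_lborel2 using True
        by (auto intro!: borel_measurable_max borel_measurable_min borel_measurable_times
          borel_measurable_divide borel_measurable_const X' L')
    next
      case False
      then show ?thesis unfolding Uj Wf_def cidx.case if_not_P[OF False] measurable_lborel2 using U' by simp
    qed
  qed (auto simp: Wf_def measurable_lborel2 intro!: borel_measurable_max borel_measurable_min borel_measurable_times
          borel_measurable_divide borel_measurable_const borel_measurable_add borel_measurable_power X' L')
qed

lemma Wf_inbox: "inbox uv \<Longrightarrow> inbox (Wf xv lv uv)"
  unfolding inbox_def Wf_def using pos_facts by (auto simp: less_imp_le)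

lemma Phi_ge:
  fixes xv lv :: "coord \<Rightarrow> real" and uv :: "cidx \<Rightarrow> real"
  assumes ib: "inbox uv"
  defines "w \<equiv> Wf xv lv uv"
  shows "A_a p * (uv Ua - w Ua)\<^sup>2 + A_s p * (uv Us - w Us)\<^sup>2 + A_k p * (uv Uk - w Uk)\<^sup>2
      + (\<Sum>j=1..mc. A_j p j * (uv (Uj j) - w (Uj j))\<^sup>2)
    \<le> hu p m mc xv uv lv - hu p m mc xv w lv"
proof -
  define ca where "ca = lv CE * xv CE + lv CL * xv CL"
  define cs where "cs = lv CSs * xv CSs + lv CSi * xv CSi"
  define ck where "ck = alpha_s p * lv CSs * (xv CSs + xv CSi)\<^sup>2 / kappa_s p"
  define cj where "cj j = lv (CMi j) * xv (CMi j)" for j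
  have wa: "w Ua = max 0 (min (ca / (2 * A_a p)) (uAmax p))" unfolding w_def Wf_def ca_def by simp
  have ws: "w Us = max 0 (min (cs / (2 * A_s p)) (uSmax p))" unfolding w_def Wf_def cs_def by simp
  have wk: "w Uk = max 0 (min (ck / (2 * A_k p)) (uKmax p))" unfolding w_def Wf_def ck_def
    by (simp add: divide_divide_eq_left mult.commute mult.left_commute)
  have wj: "w (Uj j) = max 0 (min (cj j / (2 * A_j p j)) (uMmax p j))" if "j \<in> {1..mc}" for j
    unfolding w_def Wf_def cj_def using that by simp
  have wo: "w (Uj j) = uv (Uj j)" if "j \<notin> {1..mc}" for j
    unfolding w_def Wf_def cidx.case if_not_P[OF that] ..
  have sm: "(\<Sum>j=1..m. cj j * uv (Uj j)) - (\<Sum>j=1..m. cj j * w (Uj j)) = (\<Sum>j=1..mc. cj j * (uv (Uj j) - w (Uj j)))"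
  proof -
    have "(\<Sum>j=1..m. cj j * uv (Uj j)) - (\<Sum>j=1..m. cj j * w (Uj j)) = (\<Sum>j=1..m. cj j * (uv (Uj j) - w (Uj j)))"
      by (simp add: sum_subtractf right_diff_distrib)
    also have "\<dots> = (\<Sum>j=1..mc. cj j * (uv (Uj j) - w (Uj j)))"
      by (rule sum.mono_neutral_right) (use mcm wo in auto)
    finally show ?thesis .
  qed
  have eq: "hu p m mc xv uv lv - hu p m mc xv w lv =
      ((A_a p * (uv Ua)\<^sup>2 - ca * uv Ua) - (A_a p * (w Ua)\<^sup>2 - ca * w Ua))
    + ((A_s p * (uv Us)\<^sup>2 - cs * uv Us) - (A_s p * (w Us)\<^sup>2 - cs * w Us))
    + ((A_k p * (uv Uk)\<^sup>2 - ck * uv Uk) - (A_k p * (w Uk)\<^sup>2 - ck * w Uk))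
    + (\<Sum>j=1..mc. (A_j p j * (uv (Uj j))\<^sup>2 - cj j * uv (Uj j)) - (A_j p j * (w (Uj j))\<^sup>2 - cj j * w (Uj j)))"
  proof -
    have "hu p m mc xv uv lv - hu p m mc xv w lv =
      ((A_a p * (uv Ua)\<^sup>2 - ca * uv Ua) - (A_a p * (w Ua)\<^sup>2 - ca * w Ua))
    + ((A_s p * (uv Us)\<^sup>2 - cs * uv Us) - (A_s p * (w Us)\<^sup>2 - cs * w Us))
    + ((A_k p * (uv Uk)\<^sup>2 - ck * uv Uk) - (A_k p * (w Uk)\<^sup>2 - ck * w Uk))
    + ((\<Sum>j=1..mc. A_j p j * (uv (Uj j))\<^sup>2) - (\<Sum>j=1..mc. A_j p j * (w (Uj j))\<^sup>2))
    - ((\<Sum>j=1..m. cj j * uv (Uj j)) - (\<Sum>j=1..m. cj j * w (Uj j)))"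
      unfolding hu_def ca_def cs_def ck_def cj_def by (simp add: algebra_simps)
    also have "\<dots> = ((A_a p * (uv Ua)\<^sup>2 - ca * uv Ua) - (A_a p * (w Ua)\<^sup>2 - ca * w Ua))
    + ((A_s p * (uv Us)\<^sup>2 - cs * uv Us) - (A_s p * (w Us)\<^sup>2 - cs * w Us))
    + ((A_k p * (uv Uk)\<^sup>2 - ck * uv Uk) - (A_k p * (w Uk)\<^sup>2 - ck * w Uk))
    + (\<Sum>j=1..mc. (A_j p j * (uv (Uj j))\<^sup>2 - cj j * uv (Uj j)) - (A_j p j * (w (Uj j))\<^sup>2 - cj j * w (Uj j)))"
      unfolding sm by (simp add: sum_subtractf sum.distrib algebra_simps)
    finally show ?thesis .
  qed
  have ia: "0 \<le> uv Ua" "uv Ua \<le> uAmax p" "0 \<le> uv Us" "uv Us \<le> uSmax p" "0 \<le> uv Uk" "uv Uk \<le> uKmax p"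
    using ib unfolding inbox_def by auto
  have pa: "A_a p * (uv Ua - w Ua)\<^sup>2 \<le> (A_a p * (uv Ua)\<^sup>2 - ca * uv Ua) - (A_a p * (w Ua)\<^sup>2 - ca * w Ua)"
    unfolding wa by (rule proj_ineq) (use pos_facts ia in \<open>auto simp: less_imp_le\<close>)
  have ps: "A_s p * (uv Us - w Us)\<^sup>2 \<le> (A_s p * (uv Us)\<^sup>2 - cs * uv Us) - (A_s p * (w Us)\<^sup>2 - cs * w Us)"
    unfolding ws by (rule proj_ineq) (use pos_facts ia in \<open>auto simp: less_imp_le\<close>)
  have pk: "A_k p * (uv Uk - w Uk)\<^sup>2 \<le> (A_k p * (uv Uk)\<^sup>2 - ck * uv Uk) - (A_k p * (w Uk)\<^sup>2 - ck * w Uk)"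
    unfolding wk by (rule proj_ineq) (use pos_facts ia in \<open>auto simp: less_imp_le\<close>)
  have pj: "A_j p j * (uv (Uj j) - w (Uj j))\<^sup>2 \<le> (A_j p j * (uv (Uj j))\<^sup>2 - cj j * uv (Uj j)) - (A_j p j * (w (Uj j))\<^sup>2 - cj j * w (Uj j))"
    if j: "j \<in> {1..mc}" for j
    unfolding wj[OF j] by (rule proj_ineq) (use pos_facts(4,8)[OF j] ib j in \<open>auto simp: less_imp_le inbox_def\<close>)
  have "(\<Sum>j=1..mc. A_j p j * (uv (Uj j) - w (Uj j))\<^sup>2) \<le>
      (\<Sum>j=1..mc. (A_j p j * (uv (Uj j))\<^sup>2 - cj j * uv (Uj j)) - (A_j p j * (w (Uj j))\<^sup>2 - cj j * w (Uj j)))"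
    by (rule sum_mono) (rule pj)
  then show ?thesis unfolding eq using pa ps pk by linarith
qed

lemma Phi_zero:
  assumes ib: "inbox uv" and le: "hu p m mc xv uv lv - hu p m mc xv (Wf xv lv uv) lv \<le> 0"
  shows "uv Ua = Wf xv lv uv Ua" "uv Us = Wf xv lv uv Us" "uv Uk = Wf xv lv uv Uk"
    "\<And>j. j \<in> {1..mc} \<Longrightarrow> uv (Uj j) = Wf xv lv uv (Uj j)"
proof -
  let ?w = "Wf xv lv uv"
  have nn: "0 \<le> A_j p j * (uv (Uj j) - ?w (Uj j))\<^sup>2" if "j \<in> {1..mc}" for j
    using pos_facts(8)[OF that] by simp
  have s0: "0 \<le> (\<Sum>j=1..mc. A_j p j * (uv (Uj j) - ?w (Uj j))\<^sup>2)" by (rule sum_nonneg) (rule nn)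
  have a0: "0 \<le> A_a p * (uv Ua - ?w Ua)\<^sup>2" "0 \<le> A_s p * (uv Us - ?w Us)\<^sup>2" "0 \<le> A_k p * (uv Uk - ?w Uk)\<^sup>2"
    using pos_facts by auto
  have tot: "A_a p * (uv Ua - ?w Ua)\<^sup>2 + A_s p * (uv Us - ?w Us)\<^sup>2 + A_k p * (uv Uk - ?w Uk)\<^sup>2
      + (\<Sum>j=1..mc. A_j p j * (uv (Uj j) - ?w (Uj j))\<^sup>2) \<le> 0"
    using Phi_ge[OF ib, of xv lv] le by linarith
  then have z: "A_a p * (uv Ua - ?w Ua)\<^sup>2 = 0" "A_s p * (uv Us - ?w Us)\<^sup>2 = 0" "A_k p * (uv Uk - ?w Uk)\<^sup>2 = 0"
    "(\<Sum>j=1..mc. A_j p j * (uv (Uj j) - ?w (Uj j))\<^sup>2) = 0"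
    using a0 s0 by linarith+
  show "uv Ua = ?w Ua" "uv Us = ?w Us" "uv Uk = ?w Uk" using z(1-3) pos_facts by auto
  fix j assume j: "j \<in> {1..mc}"
  have "A_j p j * (uv (Uj j) - ?w (Uj j))\<^sup>2 = 0"
    using z(4) sum_nonneg_eq_0_iff[of "{1..mc}" "\<lambda>j. A_j p j * (uv (Uj j) - ?w (Uj j))\<^sup>2"] nn j by auto
  then show "uv (Uj j) = ?w (Uj j)" using pos_facts(8)[OF j] by simp
qed

end



lemma BD_rc: "mc \<le> m \<Longrightarrow> BD m R U (\<lambda>x u. running_cost p mc x u)"
  unfolding running_cost_def power2_eq_square
  by (intro BD_add BD_sum BD_mult BD_const BD_Ua BD_Us BD_Uk BD_Uj BD_x) auto

lemma rc_bnd: "mc \<le> m \<Longrightarrow> \<exists>K. \<forall>z. okx m R U (fst z) (snd z) \<longrightarrow> \<bar>running_cost p mc (fst z) (snd z)\<bar> \<le> K"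
  using BD_rc[of mc m R U p] unfolding BD_def by auto

definition clip :: "real \<Rightarrow> real" where "clip r = max (-1) (min 1 r)"

lemma clip_abs: "\<bar>clip r\<bar> \<le> 1" unfolding clip_def by auto
lemma clip_lip: "\<bar>clip a - clip b\<bar> \<le> \<bar>a - b\<bar>" unfolding clip_def by auto
lemma clip_id: "\<bar>r\<bar> \<le> 1 \<Longrightarrow> clip r = r" unfolding clip_def by auto
lemma clip_0[simp]: "clip 0 = 0" unfolding clip_def by auto
lemma clip_meas: "f \<in> borel_measurable lborel \<Longrightarrow> (\<lambda>s. clip (f s)) \<in> borel_measurable lborel"
  unfolding clip_def measurable_lborel2 by (intro borel_measurable_max borel_measurable_min borel_measurable_const) auto

lemma sint_eqon:
  fixes f fb :: "real \<Rightarrow> real"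
  assumes "fb \<in> borel_measurable lborel" "\<And>s. s \<in> {a..b} \<Longrightarrow> f s = fb s" "\<And>s. s \<in> {a..b} \<Longrightarrow> \<bar>f s\<bar> \<le> M"
  shows "set_integrable lborel {a..b} f"
proof -
  have "set_integrable lborel {a..b} fb"
    by (rule sint_bdd[OF assms(1)]) (use assms(2,3) in auto)
  then show ?thesis using set_integrable_cong[of lborel lborel "{a..b}" "{a..b}" f fb] assms(2) by simp
qed

lemma nrm_le_card: fixes B :: real shows "(\<And>c. c \<in> coords m \<Longrightarrow> \<bar>v c\<bar> \<le> B) \<Longrightarrow> nrm m v \<le> card (coords m) * B"
  unfolding nrm_def using sum_mono[of "coords m" "\<lambda>c. \<bar>v c\<bar>" "\<lambda>c. B"] by simp

lemma cover_pieces: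
  assumes T: "0 < T" and N: "0 < N" and t: "t \<in> {0..T}"
  shows "\<exists>k<N. t \<in> {real k * T / N .. (real k + 1) * T / N}"
proof -
  define r where "r = t * N / T"
  have r0: "0 \<le> r" and rN: "r \<le> N" using t T N by (auto simp: r_def field_simps)
  show ?thesis
  proof (cases "r < N")
    case True
    define k where "k = nat \<lfloor>r\<rfloor>"
    have kr: "real k \<le> r" "r < real k + 1" using r0 unfolding k_def by linarith+
    have "k < N" using kr True by linarith
    moreover have "real k * T / N \<le> t" "t \<le> (real k + 1) * T / N"
      using kr T N by (auto simp: r_def field_simps)
    ultimately show ?thesis by auto
  next
    case False
    then have "r = N" using rN by simp
    then have "t = T" using T N by (simp add: r_def field_simps)
    moreover have "real (N - 1) * T / N \<le> T" using T N by (simp add: field_simps)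
    moreover have "(real (N - 1) + 1) * T / N = T" using N by (simp add: of_nat_diff field_simps)
    ultimately show ?thesis using N by (intro exI[of _ "N - 1"]) auto
  qed
qed



lemma small_piece:
  fixes B :: "real set"
  assumes B: "B \<in> sets lborel" "B \<subseteq> {0..T}" "B \<notin> null_sets lborel" and T: "0 < T" and eta: "0 < eta"
  shows "\<exists>A. A \<in> sets lborel \<and> A \<subseteq> B \<and> 0 < measure lborel A \<and> measure lborel A \<le> eta"
proof -
  obtain N :: nat where N: "T / eta < N" using reals_Archimedean2 by blast
  have N0: "0 < N" using N T eta by (metis divide_pos_pos of_nat_0_less_iff order.strict_trans)
  define P where "P k = B \<inter> {real k * T / N .. (real k + 1) * T / N}" for k
  have PB: "B \<subseteq> (\<Union>k\<in>{..<N}. P k)"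
  proof
    fix t assume "t \<in> B"
    then have t: "t \<in> {0..T}" using B(2) by blast
    obtain k where "k < N" "t \<in> {real k * T / N .. (real k + 1) * T / N}" using cover_pieces[OF T N0 t] by blast
    then show "t \<in> (\<Union>k\<in>{..<N}. P k)" using \<open>t \<in> B\<close> unfolding P_def by blast
  qed
  have Pm: "P k \<in> sets lborel" for k using B(1) unfolding P_def by auto
  have "\<exists>k<N. P k \<notin> null_sets lborel"
  proof (rule ccontr)
    assume "\<not> ?thesis"
    then have nk: "\<And>k. k \<in> {..<N} \<Longrightarrow> P k \<in> null_sets lborel" by blast
    have "(\<Union>k\<in>{..<N}. P k) \<in> null_sets lborel"
      by (rule null_sets_UN'[where I="{..<N}"]) (auto intro: countable_finite nk)
    then have "B \<in> null_sets lborel" using PB B(1) null_sets_subset by blast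
    then show False using B(3) by simp
  qed
  then obtain k where k: "k < N" "P k \<notin> null_sets lborel" by blast
  have len: "(real k + 1) * T / N - real k * T / N = T / N" by (simp add: add_divide_distrib algebra_simps)
  have "emeasure lborel (P k) \<le> emeasure lborel {real k * T / N .. (real k + 1) * T / N}"
    unfolding P_def by (intro emeasure_mono) auto
  also have "\<dots> = ennreal (T / N)"
  proof -
    have "real k * T / N \<le> (real k + 1) * T / N" using T N0 by (simp add: divide_right_mono mult_right_mono)
    then show ?thesis using len by simp
  qed
  finally have le: "emeasure lborel (P k) \<le> ennreal (T / N)" .
  have fin0: "emeasure lborel (P k) < top" by (rule le_less_trans[OF le ennreal_less_top])
  then have fin: "emeasure lborel (P k) \<noteq> top" by simp
  have meq: "emeasure lborel (P k) = ennreal (measure lborel (P k))" using fin by (rule emeasure_eq_ennreal_measure)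
  have "measure lborel (P k) \<le> T / N" using le unfolding meq using T N0 by (simp add: ennreal_le_iff)
  also have "T / N \<le> eta" using N eta T N0 by (simp add: field_simps)
  finally have le2: "measure lborel (P k) \<le> eta" .
  have "emeasure lborel (P k) \<noteq> 0" using k(2) Pm by (simp add: null_sets_def)
  then have "0 < measure lborel (P k)" unfolding meq by (simp add: zero_less_measure_iff)
  moreover have "P k \<subseteq> B" unfolding P_def by blast
  ultimately show ?thesis using Pm[of k] le2 by blast
qed



context setting begin

definition W where "W t = Wf (x t) (lam t) (ustar t)"
definition Wb where "Wb s = Wf (xb s) (lb s) (ub s)"
definition Phi where "Phi t = hu p m mc (x t) (ustar t) (lam t) - hu p m mc (x t) (W t) (lam t)"
definition PhiB where "PhiB s = hu p m mc (xb s) (ub s) (lb s) - hu p m mc (xb s) (Wb s) (lb s)"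

lemma bar_eq: assumes "s \<in> {0..T}" shows "xb s = x s" "ub s = ustar s" "lb s = lam s"
  using assms by (auto simp: fun_eq_iff xb_def ub_def lb_def)

lemma Wb_eq: "s \<in> {0..T} \<Longrightarrow> Wb s = W s"
  unfolding Wb_def W_def using bar_eq by simp

lemma PhiB_eq: "s \<in> {0..T} \<Longrightarrow> PhiB s = Phi s"
  unfolding PhiB_def Phi_def using bar_eq Wb_eq by simp

lemma Wb_meas: "(\<lambda>s. Wb s k) \<in> borel_measurable lborel"
  unfolding Wb_def by (rule Wf_meas, erule xb_meas, erule lb_meas, rule ub_meas)

lemma PhiB_meas: "PhiB \<in> borel_measurable lborel"
proof -
  have "(\<lambda>s. hu p m mc (xb s) (ub s) (lb s)) \<in> borel_measurable lborel"
    by (rule meas_hu, erule xb_meas, erule lb_meas, rule ub_meas, rule mcm)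
  moreover have "(\<lambda>s. hu p m mc (xb s) (Wb s) (lb s)) \<in> borel_measurable lborel"
    by (rule meas_hu, erule xb_meas, erule lb_meas, rule Wb_meas, rule mcm)
  ultimately show ?thesis unfolding PhiB_def[abs_def] by (rule borel_measurable_diff)
qed

lemma W_inbox: "t \<in> {0..T} \<Longrightarrow> inbox (W t)"
  unfolding W_def by (intro Wf_inbox inbox_ustar)

lemma Wb_inbox: "inbox (Wb s)"
  unfolding Wb_def by (intro Wf_inbox ub_inbox)

lemma Phi_nn: "t \<in> {0..T} \<Longrightarrow> 0 \<le> Phi t"
proof -
  assume t: "t \<in> {0..T}"
  have "0 \<le> A_a p * (ustar t Ua - W t Ua)\<^sup>2 + A_s p * (ustar t Us - W t Us)\<^sup>2 + A_k p * (ustar t Uk - W t Uk)\<^sup>2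
      + (\<Sum>j=1..mc. A_j p j * (ustar t (Uj j) - W t (Uj j))\<^sup>2)"
    using pos_facts by (intro add_nonneg_nonneg sum_nonneg) (auto simp: less_imp_le)
  also have "\<dots> \<le> Phi t" unfolding Phi_def W_def by (rule Phi_ge[OF inbox_ustar[OF t]])
  finally show ?thesis .
qed

definition Kf where "Kf = (SOME K. \<forall>c\<in>coords m. \<forall>z. okx m (Bx + 1) Um (fst z) (snd z) \<longrightarrow>
    \<bar>rhs p m (snd z) (fst z) c\<bar> \<le> K * 1)"
lemma Kf: "c \<in> coords m \<Longrightarrow> okx m (Bx + 1) Um z v \<Longrightarrow> \<bar>rhs p m v z c\<bar> \<le> \<bar>Kf\<bar>"
proof -
  assume c: "c \<in> coords m" and ok: "okx m (Bx + 1) Um z v"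
  have "\<exists>K. \<forall>c\<in>coords m. \<forall>z. okx m (Bx + 1) Um (fst z) (snd z) \<longrightarrow> \<bar>rhs p m (snd z) (fst z) c\<bar> \<le> K * 1"
    by (rule rhs_bnd)
  from someI_ex[OF this] have "\<bar>rhs p m v z c\<bar> \<le> Kf" unfolding Kf_def using c ok by fastforce
  then show ?thesis by simp
qed

definition KD0 where "KD0 = (SOME K. \<forall>c\<in>coords m. \<forall>z. okx m (Bx + 1) Um (fst z) (fst (snd z)) \<longrightarrow>
    \<bar>Df p m (fst (snd z)) (fst z) (snd (snd z)) c\<bar> \<le> K * nrm m (snd (snd z)))"
lemma KD0: "c \<in> coords m \<Longrightarrow> okx m (Bx + 1) Um z v \<Longrightarrow> \<bar>Df p m v z e c\<bar> \<le> \<bar>KD0\<bar> * nrm m e"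
proof -
  assume c: "c \<in> coords m" and ok: "okx m (Bx + 1) Um z v"
  have "\<exists>K. \<forall>c\<in>coords m. \<forall>z. okx m (Bx + 1) Um (fst z) (fst (snd z)) \<longrightarrow>
    \<bar>Df p m (fst (snd z)) (fst z) (snd (snd z)) c\<bar> \<le> K * nrm m (snd (snd z))"
    by (rule Df_bnd)
  from someI_ex[OF this] have "\<bar>Df p m v z e c\<bar> \<le> KD0 * nrm m e" unfolding KD0_def using c ok by fastforce
  then show ?thesis using nrm_nonneg[of m e] by (meson abs_ge_self mult_right_mono order_trans)
qed

definition KQ0 where "KQ0 = (SOME K. \<forall>c\<in>coords m. \<forall>z. okx m (Bx + 1) Um (fst z) (fst (snd z)) \<longrightarrow>
    \<bar>Qf p m (fst (snd z)) (snd (snd z)) c\<bar> \<le> K * (nrm m (snd (snd z)))^2)"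
lemma KQ0: "c \<in> coords m \<Longrightarrow> okx m (Bx + 1) Um z v \<Longrightarrow> \<bar>Qf p m v e c\<bar> \<le> \<bar>KQ0\<bar> * (nrm m e)^2"
proof -
  assume c: "c \<in> coords m" and ok: "okx m (Bx + 1) Um z v"
  have "\<exists>K. \<forall>c\<in>coords m. \<forall>z. okx m (Bx + 1) Um (fst z) (fst (snd z)) \<longrightarrow>
    \<bar>Qf p m (fst (snd z)) (snd (snd z)) c\<bar> \<le> K * (nrm m (snd (snd z)))^2"
    by (rule Qf_bnd)
  from someI_ex[OF this] have "\<bar>Qf p m v e c\<bar> \<le> KQ0 * (nrm m e)^2" unfolding KQ0_def using c ok by fastforce
  then show ?thesis by (meson abs_ge_self mult_right_mono order_trans zero_le_power2)
qed

definition Kr where "Kr = (SOME K. \<forall>z. okx m (Bx + 1) Um (fst z) (snd z) \<longrightarrow> \<bar>running_cost p mc (fst z) (snd z)\<bar> \<le> K)"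
lemma Kr: "okx m (Bx + 1) Um z v \<Longrightarrow> \<bar>running_cost p mc z v\<bar> \<le> Kr"
proof -
  assume ok: "okx m (Bx + 1) Um z v"
  have "\<exists>K. \<forall>z. okx m (Bx + 1) Um (fst z) (snd z) \<longrightarrow> \<bar>running_cost p mc (fst z) (snd z)\<bar> \<le> K"
    by (rule rc_bnd[OF mcm])
  from someI_ex[OF this] show ?thesis unfolding Kr_def using ok by fastforce
qed

definition "Kl = card (coords m) * (\<bar>KD0\<bar> + 2 * card (coords m) * \<bar>KQ0\<bar>)"
definition "c1 = card (coords m) * (2 * \<bar>Kf\<bar>)"
definition "EE = exp (Kl * T)"
definition "C2 = 2 * KDh * c1 * EE + T * KQh * c1^2 * EE^2"

lemma consts_nn: "0 \<le> Kl" "0 \<le> c1" "0 < EE" "0 \<le> C2"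
  unfolding Kl_def c1_def EE_def C2_def using KDh(1) KQh(1) Tpos by auto

end



context setting begin

lemma contra:
  assumes A: "A \<in> sets lborel" "A \<subseteq> {0..T}" "0 < measure lborel A"
    and Aphi: "\<And>t. t \<in> A \<Longrightarrow> \<delta> \<le> Phi t"
    and small1: "c1 * measure lborel A * EE \<le> 1"
    and small2: "measure lborel A * C2 < \<delta>"
  shows False
proof -
  define mA where "mA = measure lborel A"
  define aE where "aE = c1 * mA * EE"
  have aE_nn: "0 \<le> aE" unfolding aE_def mA_def using consts_nn by simp
  have aE1: "aE \<le> 1" using small1 unfolding aE_def mA_def .
  define uA where "uA t k = (if t \<in> A then W t k else ustar t k)" for t k
  define ubA where "ubA s k = (if s \<in> A then Wb s k else ub s k)" for s k
  have ubA_eq: "ubA s = uA s" if "s \<in> {0..T}" for s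
    using that Wb_eq bar_eq by (auto simp: fun_eq_iff ubA_def uA_def)
  have ubA_ind: "ubA s k = indicator {0..T} s * uA s k" for s k
  proof (cases "s \<in> {0..T}")
    case True then show ?thesis using ubA_eq[OF True] by simp
  next
    case False then have "s \<notin> A" using A(2) by blast
    then show ?thesis using False by (simp add: ubA_def uA_def ub_def)
  qed
  have ubA_meas: "(\<lambda>s. ubA s k) \<in> borel_measurable lborel" for k
  proof -
    have "(\<lambda>s. ubA s k) = (\<lambda>s. indicator A s * Wb s k + (1 - indicator A s) * ub s k)"
      by (auto simp: fun_eq_iff ubA_def indicator_def)
    also have "\<dots> \<in> borel_measurable lborel"
      using A(1) Wb_meas ub_meas by (intro borel_measurable_add borel_measurable_times borel_measurable_diff
        borel_measurable_const borel_measurable_indicator) auto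
    finally show ?thesis .
  qed
  have ubA_fun: "ubA s = (if s \<in> A then Wb s else ub s)" for s by (auto simp: fun_eq_iff ubA_def)
  have ubA_inbox: "inbox (ubA s)" for s
    using Wb_inbox ub_inbox by (cases "s \<in> A") (auto simp: ubA_fun)
  have uA_inbox: "inbox (uA t)" if "t \<in> {0..T}" for t
    using ubA_inbox[of t] ubA_eq[OF that] by simp
  have adm_uA: "admissible p mc T uA"
  proof -
    have "\<forall>k. set_borel_measurable lborel {0..T} (\<lambda>t. uA t k)"
      unfolding set_borel_measurable_def using ubA_meas by (simp add: ubA_ind)
    moreover have "\<forall>t\<in>{0..T}. inbox (uA t)" using uA_inbox by blast
    ultimately show ?thesis unfolding admissible_def inbox_def by blast
  qed
  define G where "G s v c = rhs p m (ubA s) (\<lambda>c'. xb s c' + clip (v c')) c - rhs p m (ub s) (xb s) c" for s v c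
  have ok1: "okx m (Bx + 1) Um (\<lambda>c'. xb s c' + clip (v c')) (ubA s)" for s v
  proof (rule inbox_okx[OF ubA_inbox], intro ballI)
    fix c assume c: "c \<in> coords m"
    have "\<bar>xb s c + clip (v c)\<bar> \<le> \<bar>xb s c\<bar> + \<bar>clip (v c)\<bar>" by (rule abs_triangle_ineq)
    also have "\<dots> \<le> Bx + 1" using xb_bound[OF c] clip_abs by (intro add_mono) auto
    finally show "\<bar>xb s c + clip (v c)\<bar> \<le> Bx + 1" .
  qed
  have ok2: "okx m (Bx + 1) Um (xb s) (ub s)" for s
    by (rule inbox_okx[OF ub_inbox]) (use xb_bound in \<open>force intro: order_trans[OF xb_bound]\<close>)
  have Gbnd: "\<bar>G s v c\<bar> \<le> 2 * \<bar>Kf\<bar>" if c: "c \<in> coords m" for s v c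
  proof -
    have "\<bar>G s v c\<bar> \<le> \<bar>rhs p m (ubA s) (\<lambda>c'. xb s c' + clip (v c')) c\<bar> + \<bar>rhs p m (ub s) (xb s) c\<bar>"
      unfolding G_def by (rule abs_triangle_ineq4)
    also have "\<dots> \<le> \<bar>Kf\<bar> + \<bar>Kf\<bar>" by (intro add_mono Kf[OF c] ok1 ok2)
    finally show ?thesis by simp
  qed
  have Glip: "nrm m (\<lambda>c. G s v c - G s w c) \<le> Kl * nrm m (\<lambda>c. v c - w c)" for s v w
  proof -
    define z where "z c' = xb s c' + clip (w c')" for c'
    define e where "e c' = clip (v c') - clip (w c')" for c'
    have ze: "(\<lambda>c'. xb s c' + clip (v c')) = (\<lambda>c. z c + e c)" by (auto simp: z_def e_def fun_eq_iff)
    have okz: "okx m (Bx + 1) Um z (ubA s)" unfolding z_def by (rule ok1)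
    have ne: "nrm m e \<le> nrm m (\<lambda>c. v c - w c)" unfolding nrm_def e_def by (intro sum_mono clip_lip)
    have ne2: "nrm m e \<le> real (card (coords m)) * 2"
      by (rule nrm_le_card) (auto simp: e_def intro: order_trans[OF abs_triangle_ineq4] add_mono[OF clip_abs clip_abs, simplified])
    have pc: "\<bar>G s v c - G s w c\<bar> \<le> (\<bar>KD0\<bar> + 2 * card (coords m) * \<bar>KQ0\<bar>) * nrm m e" if c: "c \<in> coords m" for c
    proof -
      have zf: "(\<lambda>c'. xb s c' + clip (w c')) = z" by (simp add: z_def fun_eq_iff)
      have "G s v c - G s w c = rhs p m (ubA s) (\<lambda>c. z c + e c) c - rhs p m (ubA s) z c"
        unfolding G_def ze zf by simp
      also have "\<dots> = Df p m (ubA s) z e c + Qf p m (ubA s) e c"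
        using rhs_expand[of p m "ubA s" z e c] by simp
      finally have "G s v c - G s w c = Df p m (ubA s) z e c + Qf p m (ubA s) e c" .
      then have "\<bar>G s v c - G s w c\<bar> \<le> \<bar>Df p m (ubA s) z e c\<bar> + \<bar>Qf p m (ubA s) e c\<bar>" by simp
      also have "\<dots> \<le> \<bar>KD0\<bar> * nrm m e + \<bar>KQ0\<bar> * (nrm m e)^2" by (intro add_mono KD0[OF c okz] KQ0[OF c okz])
      also have "\<bar>KQ0\<bar> * (nrm m e)^2 \<le> \<bar>KQ0\<bar> * ((real (card (coords m)) * 2) * nrm m e)"
        unfolding power2_eq_square by (intro mult_left_mono mult_right_mono ne2 nrm_nonneg) auto
      finally show ?thesis by (simp add: algebra_simps)
    qed
    have "nrm m (\<lambda>c. G s v c - G s w c) \<le> (\<Sum>c\<in>coords m. (\<bar>KD0\<bar> + 2 * card (coords m) * \<bar>KQ0\<bar>) * nrm m e)"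
      unfolding nrm_def[of m "\<lambda>c. G s v c - G s w c"] by (rule sum_mono) (rule pc)
    also have "\<dots> = Kl * nrm m e" unfolding Kl_def by simp
    also have "\<dots> \<le> Kl * nrm m (\<lambda>c. v c - w c)" by (rule mult_left_mono[OF ne consts_nn(1)])
    finally show ?thesis .
  qed
  have Gmeas: "(\<lambda>s. G s (v s) c) \<in> borel_measurable lborel"
    if v: "\<And>c'. c' \<in> coords m \<Longrightarrow> (\<lambda>s. v s c') \<in> borel_measurable lborel" and c: "c \<in> coords m" for v c
  proof -
    have "(\<lambda>s. rhs p m (ubA s) (\<lambda>c'. xb s c' + clip (v s c')) c) \<in> borel_measurable lborel"
    proof (rule meas_rhs[OF _ ubA_meas c])
      fix c' assume "c' \<in> coords m"
      then show "(\<lambda>s. xb s c' + clip (v s c')) \<in> borel_measurable lborel"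
        using xb_meas clip_meas[OF v] by (intro borel_measurable_add) auto
    qed
    moreover have "(\<lambda>s. rhs p m (ub s) (xb s) c) \<in> borel_measurable lborel"
      by (rule meas_rhs[OF _ ub_meas c]) (rule xb_meas)
    ultimately show ?thesis unfolding G_def by (rule borel_measurable_diff)
  qed
  have G0A: "G s (\<lambda>_. 0) c = 0" if "s \<notin> A" for s c
    using that by (simp add: G_def ubA_fun)
  have a0: "nrm m (\<lambda>c. LINT s:{0..t}|lborel. G s (\<lambda>_. 0) c) \<le> c1 * mA" if t: "t \<in> {0..T}" for t
  proof -
    have "emeasure lborel A \<le> emeasure lborel {0..T}" using A(2) by (intro emeasure_mono) auto
    also have "\<dots> < top" using Tpos by simp
    finally have fin: "emeasure lborel A < \<infinity>" by simp
    have pc: "\<bar>LINT s:{0..t}|lborel. G s (\<lambda>_. 0) c\<bar> \<le> 2 * \<bar>Kf\<bar> * mA" if c: "c \<in> coords m" for c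
    proof -
      have gm: "(\<lambda>s. G s (\<lambda>_. 0) c) \<in> borel_measurable lborel" using Gmeas[of "\<lambda>s c. 0" c] c by simp
      have ii: "integrable lborel (\<lambda>s. indicator {0..t} s *\<^sub>R G s (\<lambda>_. 0) c)"
        using sint_bdd[OF gm, of "{0..t}" 0 t "2 * \<bar>Kf\<bar>"] Gbnd[OF c] unfolding set_integrable_def by auto
      have ig: "integrable lborel (\<lambda>s. 2 * \<bar>Kf\<bar> * indicator A s)"
        using A(1) fin by (intro integrable_mult_right integrable_real_indicator) auto
      have "\<bar>LINT s:{0..t}|lborel. G s (\<lambda>_. 0) c\<bar> \<le> (\<integral>s. 2 * \<bar>Kf\<bar> * indicator A s \<partial>lborel)"
        unfolding set_lebesgue_integral_def
      proof (rule integral_abs_bound_integral[OF ii ig])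
        fix s
        show "\<bar>indicator {0..t} s *\<^sub>R G s (\<lambda>_. 0) c\<bar> \<le> 2 * \<bar>Kf\<bar> * indicator A s"
          using Gbnd[OF c, of s "\<lambda>_. 0"] G0A[of s c] by (cases "s \<in> A"; cases "s \<in> {0..t}") auto
      qed
      also have "\<dots> = 2 * \<bar>Kf\<bar> * mA" unfolding mA_def using A(1) by simp
      finally show ?thesis .
    qed
    have "nrm m (\<lambda>c. LINT s:{0..t}|lborel. G s (\<lambda>_. 0) c) \<le> card (coords m) * (2 * \<bar>Kf\<bar> * mA)"
      by (rule nrm_le_card) (rule pc)
    then show ?thesis unfolding c1_def by (simp add: algebra_simps)
  qed
  obtain d where d_out: "\<forall>t c. c \<notin> coords m \<longrightarrow> d t c = 0"
    and d_meas: "\<forall>c\<in>coords m. (\<lambda>s. d s c) \<in> borel_measurable lborel"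
    and d_eq: "\<forall>c\<in>coords m. \<forall>t\<in>{0..T}. d t c = (LINT s:{0..t}|lborel. G s (d s) c)"
    and d_bnd: "\<forall>t\<in>{0..T}. nrm m (d t) \<le> c1 * mA * exp (Kl * T)"
    using picard[where G=G and T=T and K=Kl and a="c1 * mA" and Mb="2 * \<bar>Kf\<bar>" and m=m] Tpos consts_nn(1)
      Gmeas Gbnd Glip a0 by (auto simp: less_imp_le)
  have d_small: "\<bar>d t c\<bar> \<le> 1" if t: "t \<in> {0..T}" for t c
  proof (cases "c \<in> coords m")
    case True
    have "\<bar>d t c\<bar> \<le> nrm m (d t)" by (rule nrm_ge[OF True])
    also have "\<dots> \<le> aE" using d_bnd t unfolding aE_def EE_def by auto
    finally show ?thesis using aE1 by simp
  next
    case False then show ?thesis using d_out by simp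
  qed
  have nd: "nrm m (d t) \<le> aE" if "t \<in> {0..T}" for t using d_bnd that unfolding aE_def EE_def by auto
  define y where "y t c = x t c + d t c" for t c
  have yfun: "y s = (\<lambda>c. x s c + d s c)" for s by (simp add: fun_eq_iff y_def)
  have Geq: "G s (d s) c = rhs p m (uA s) (y s) c - rhs p m (ustar s) (x s) c" if s: "s \<in> {0..T}" for s c
  proof -
    have "(\<lambda>c'. xb s c' + clip (d s c')) = y s"
      using bar_eq(1)[OF s] clip_id[OF d_small[OF s]] by (simp add: fun_eq_iff y_def)
    then show ?thesis unfolding G_def using ubA_eq[OF s] bar_eq[OF s] by simp
  qed
  have Gd_meas: "(\<lambda>s. G s (d s) c) \<in> borel_measurable lborel" if "c \<in> coords m" for c
    by (rule Gmeas[OF _ that]) (use d_meas in auto)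
  have Gd_int: "set_integrable lborel {0..t} (\<lambda>s. G s (d s) c)" if "c \<in> coords m" for t c
    by (rule sint_bdd[OF Gd_meas[OF that], of _ 0 t "2 * \<bar>Kf\<bar>"]) (use Gbnd that in auto)
  have d0: "d 0 c = 0" if c: "c \<in> coords m" for c
  proof -
    have "d 0 c = (LINT s:{0..0}|lborel. G s (d s) c)" using d_eq c Tpos by auto
    also have "\<dots> = integral {0..0} (\<lambda>s. G s (d s) c)" by (rule set_borel_integral_eq_integral(2)[OF Gd_int[OF c]])
    also have "\<dots> = 0" by simp
    finally show ?thesis .
  qed
  have fx_sint: "set_integrable lborel {0..t} (fx c)" if "c \<in> coords m" for c t
    unfolding set_integrable_def by (rule integrable_mult_indicator) (use fx_int[OF that] in auto)
  have sol_y: "state_sol p m T x0 uA y"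
    unfolding state_sol_def
  proof (intro ballI conjI)
    fix c assume c: "c \<in> coords m"
    show "y 0 c = x0 c" using x0_eq[OF c] d0[OF c] by (simp add: y_def)
    fix t assume t: "t \<in> {0..T}"
    have eqf: "\<forall>s. s \<in> {0..t} \<longrightarrow> fx c s + G s (d s) c = rhs p m (uA s) (y s) c"
    proof (intro allI impI)
      fix s assume "s \<in> {0..t}"
      then have s: "s \<in> {0..T}" using t by auto
      show "fx c s + G s (d s) c = rhs p m (uA s) (y s) c" using Geq[OF s] s by (simp add: fx_def)
    qed
    have i: "set_integrable lborel {0..t} (\<lambda>s. fx c s + G s (d s) c)"
      using set_integral_add(1)[OF fx_sint[OF c] Gd_int[OF c]] .
    show "set_integrable lborel {0..t} (\<lambda>s. rhs p m (uA s) (y s) c)"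
      using i set_integrable_cong[of lborel lborel "{0..t}" "{0..t}" "\<lambda>s. fx c s + G s (d s) c" "\<lambda>s. rhs p m (uA s) (y s) c"] eqf
      by auto
    have "y t c - y 0 c = (LINT s:{0..t}|lborel. fx c s) + (LINT s:{0..t}|lborel. G s (d s) c)"
      using x_eq[OF c t] d_eq c t x0_eq[OF c] d0[OF c] by (simp add: y_def)
    also have "\<dots> = (LINT s:{0..t}|lborel. fx c s + G s (d s) c)"
      using set_integral_add(2)[OF fx_sint[OF c] Gd_int[OF c]] by simp
    also have "\<dots> = (LINT s:{0..t}|lborel. rhs p m (uA s) (y s) c)"
      by (rule set_lebesgue_integral_cong) (use eqf in auto)
    finally show "y t c - y 0 c = (LINT s:{0..t}|lborel. rhs p m (uA s) (y s) c)" .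
  qed
  have Jle: "cost_J p mc T x ustar \<le> cost_J p mc T y uA" using opt adm_uA sol_y by blast
  have y_bnd: "\<bar>y s c\<bar> \<le> Bx + 1" if s: "s \<in> {0..T}" and c: "c \<in> coords m" for s c
    using x_bound[OF c s] d_small[OF s, of c] by (simp add: y_def)
  have oky: "okx m (Bx + 1) Um (y s) (uA s)" if s: "s \<in> {0..T}" for s
    by (rule inbox_okx[OF uA_inbox[OF s]]) (use y_bnd s in auto)
  have okxu: "okx m (Bx + 1) Um (x s) (uA s)" if s: "s \<in> {0..T}" for s by (rule okx_x[OF s uA_inbox[OF s]])
  have okxs: "okx m (Bx + 1) Um (x s) (ustar s)" if s: "s \<in> {0..T}" for s by (rule okx_x[OF s inbox_ustar[OF s]])
  have lamB: "\<forall>c\<in>coords m. \<bar>lam s c\<bar> \<le> Bl" if s: "s \<in> {0..T}" for s using lam_bound s by blast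
  define Ly where "Ly s = running_cost p mc (y s) (uA s)" for s
  define Lx where "Lx s = running_cost p mc (x s) (ustar s)" for s
  have Ly_int: "set_integrable lborel {0..T} Ly"
  proof (rule sint_eqon)
    show "(\<lambda>s. running_cost p mc (\<lambda>c. xb s c + d s c) (ubA s)) \<in> borel_measurable lborel"
      by (rule meas_rc[OF _ ubA_meas mcm]) (use xb_meas d_meas in \<open>auto intro!: borel_measurable_add\<close>)
    fix s assume s: "s \<in> {0..T}"
    show "Ly s = running_cost p mc (\<lambda>c. xb s c + d s c) (ubA s)"
      unfolding Ly_def using bar_eq[OF s] ubA_eq[OF s] yfun by simp
    show "\<bar>Ly s\<bar> \<le> Kr" unfolding Ly_def by (rule Kr[OF oky[OF s]])
  qed
  have Lx_int: "set_integrable lborel {0..T} Lx"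
  proof (rule sint_eqon)
    show "(\<lambda>s. running_cost p mc (xb s) (ub s)) \<in> borel_measurable lborel"
      by (rule meas_rc[OF _ ub_meas mcm]) (rule xb_meas)
    fix s assume s: "s \<in> {0..T}"
    show "Lx s = running_cost p mc (xb s) (ub s)" unfolding Lx_def using bar_eq[OF s] by simp
    show "\<bar>Lx s\<bar> \<le> Kr" unfolding Lx_def by (rule Kr[OF okxs[OF s]])
  qed
  define lamg where "lamg c s = lam s c * G s (d s) c" for c s
  define hd where "hd c s = hb c s * d s c" for c s
  have lamg_int: "set_integrable lborel {0..T} (lamg c)" if c: "c \<in> coords m" for c
  proof (rule sint_eqon)
    show "(\<lambda>s. lb s c * G s (d s) c) \<in> borel_measurable lborel"
      by (intro borel_measurable_times lb_meas[OF c] Gd_meas[OF c])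
    fix s assume s: "s \<in> {0..T}"
    show "lamg c s = lb s c * G s (d s) c" unfolding lamg_def using bar_eq[OF s] by simp
    show "\<bar>lamg c s\<bar> \<le> Bl * (2 * \<bar>Kf\<bar>)" unfolding lamg_def abs_mult
      by (rule mult_mono) (use lam_bound[OF c s] Gbnd[OF c] Bl_nn in auto)
  qed
  have hd_int: "set_integrable lborel {0..T} (hd c)" if c: "c \<in> coords m" for c
  proof (rule sint_eqon)
    show "hd c \<in> borel_measurable lborel"
      unfolding hd_def[abs_def] using hb_meas[OF c] d_meas c by (intro borel_measurable_times) auto
    fix s assume s: "s \<in> {0..T}"
    show "hd c s = hd c s" ..
    show "\<bar>hd c s\<bar> \<le> KDh * 1" unfolding hd_def abs_mult
      by (rule mult_mono) (use hb_bound[OF c] d_small[OF s] KDh(1) in auto)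
  qed
  have fub: "(LINT s:{0..T}|lborel. lamg c s) = (LINT s:{0..T}|lborel. hd c s)" if c: "c \<in> coords m" for c
  proof -
    have f: "(LINT t:{0..T}|lborel. (LINT s:{t..T}|lborel. hb c s) * (indicator {0..T} t * G t (d t) c))
       = (LINT s:{0..T}|lborel. hb c s * (LINT t:{0..s}|lborel. indicator {0..T} t * G t (d t) c))"
    proof (rule fubini_parts[where M="KDh + 2 * \<bar>Kf\<bar>"])
      show "(\<lambda>t. indicator {0..T} t * G t (d t) c) \<in> borel_measurable lborel"
        by (intro borel_measurable_times borel_measurable_indicator Gd_meas[OF c]) auto
      show "hb c \<in> borel_measurable lborel" by (rule hb_meas[OF c])
      fix s
      show "\<bar>indicator {0..T} s * G s (d s) c\<bar> \<le> KDh + 2 * \<bar>Kf\<bar>"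
        using Gbnd[OF c, of s "d s"] KDh(1) by (auto simp: indicator_def)
      show "\<bar>hb c s\<bar> \<le> KDh + 2 * \<bar>Kf\<bar>" using hb_bound[OF c, of s] by simp
    qed
    have l: "(LINT t:{0..T}|lborel. (LINT s:{t..T}|lborel. hb c s) * (indicator {0..T} t * G t (d t) c))
        = (LINT t:{0..T}|lborel. lamg c t)"
      by (rule set_lebesgue_integral_cong) (auto simp: lamg_def lam_eq[OF c])
    have r: "(LINT s:{0..T}|lborel. hb c s * (LINT t:{0..s}|lborel. indicator {0..T} t * G t (d t) c))
        = (LINT s:{0..T}|lborel. hd c s)"
    proof (rule set_lebesgue_integral_cong)
      show "\<forall>s. s \<in> {0..T} \<longrightarrow> hb c s * (LINT t:{0..s}|lborel. indicator {0..T} t * G t (d t) c) = hd c s"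
      proof (intro allI impI)
        fix s assume s: "s \<in> {0..T}"
        have "(LINT t:{0..s}|lborel. indicator {0..T} t * G t (d t) c) = (LINT t:{0..s}|lborel. G t (d t) c)"
          by (rule set_lebesgue_integral_cong) (use s in auto)
        also have "\<dots> = d s c" using d_eq c s by auto
        finally show "hb c s * (LINT t:{0..s}|lborel. indicator {0..T} t * G t (d t) c) = hd c s"
          by (simp add: hd_def)
      qed
    qed simp
    show ?thesis using f l r by simp
  qed
  define Dst where "Dst s = Dh p m mc (ustar s) (lam s) (x s) (d s)" for s
  have Dst_eq: "Dst s = (\<Sum>c\<in>coords m. hd c s)" if s: "s \<in> {0..T}" for s
  proof -
    have "Dst s = (\<Sum>c\<in>coords m. d s c * Dh p m mc (ustar s) (lam s) (x s) (ec c))"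
      unfolding Dst_def by (rule Dh_decomp) (use d_out in auto)
    also have "\<dots> = (\<Sum>c\<in>coords m. hd c s)"
      by (rule sum.cong) (use s in \<open>auto simp: hd_def hb_def hc_eq\<close>)
    finally show ?thesis .
  qed
  note ssl = sint_sum[where I="coords m" and f=lamg and A="{0..T}", OF finite_coords lamg_int]
  note ssh = sint_sum[where I="coords m" and f=hd and A="{0..T}", OF finite_coords hd_int]
  have Dst_int: "set_integrable lborel {0..T} Dst"
    using ssh set_integrable_cong[of lborel lborel "{0..T}" "{0..T}" Dst "\<lambda>s. \<Sum>c\<in>coords m. hd c s"] Dst_eq by auto
  have Dst_I: "(LINT s:{0..T}|lborel. Dst s) = (LINT s:{0..T}|lborel. (\<Sum>c\<in>coords m. lamg c s))"
  proof -
    have "(LINT s:{0..T}|lborel. Dst s) = (LINT s:{0..T}|lborel. (\<Sum>c\<in>coords m. hd c s))"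
      by (rule set_lebesgue_integral_cong) (use Dst_eq in auto)
    also have "\<dots> = (\<Sum>c\<in>coords m. LINT s:{0..T}|lborel. hd c s)" using ssh by simp
    also have "\<dots> = (\<Sum>c\<in>coords m. LINT s:{0..T}|lborel. lamg c s)" using fub by simp
    also have "\<dots> = (LINT s:{0..T}|lborel. (\<Sum>c\<in>coords m. lamg c s))" using ssl by simp
    finally show ?thesis .
  qed
  define Psi where "Psi s = (hu p m mc (x s) (uA s) (lam s) - hu p m mc (x s) (ustar s) (lam s))
     + (Dh p m mc (uA s) (lam s) (x s) (d s) - Dh p m mc (ustar s) (lam s) (x s) (d s))
     + Qh p m (uA s) (lam s) (d s)" for s
  have LPsi: "Ly s - Lx s = Psi s + Dst s - (\<Sum>c\<in>coords m. lamg c s)" if s: "s \<in> {0..T}" for s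
  proof -
    have rc: "running_cost p mc z v = hamiltonian p m mc z v (lam s) - (\<Sum>c\<in>coords m. lam s c * rhs p m v z c)" for z v
      unfolding hamiltonian_def by simp
    have h1: "hamiltonian p m mc (y s) (uA s) (lam s) = hamiltonian p m mc (x s) (uA s) (lam s)
        + Dh p m mc (uA s) (lam s) (x s) (d s) + Qh p m (uA s) (lam s) (d s)"
      unfolding yfun by (rule ham_expand)
    have h2: "hamiltonian p m mc (x s) (uA s) (lam s) - hamiltonian p m mc (x s) (ustar s) (lam s)
        = hu p m mc (x s) (uA s) (lam s) - hu p m mc (x s) (ustar s) (lam s)"
      using ham_hu[of p m mc "x s" "uA s" "lam s" "ustar s"] by simp
    have h3: "(\<Sum>c\<in>coords m. lam s c * rhs p m (uA s) (y s) c) - (\<Sum>c\<in>coords m. lam s c * rhs p m (ustar s) (x s) c)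
        = (\<Sum>c\<in>coords m. lamg c s)"
      unfolding sum_subtractf[symmetric] lamg_def
      by (rule sum.cong) (use Geq[OF s] in \<open>auto simp: right_diff_distrib\<close>)
    show ?thesis unfolding Ly_def Lx_def rc Psi_def Dst_def using h1 h2 h3 by simp
  qed
  have Psi_int: "set_integrable lborel {0..T} Psi"
  proof -
    have i1: "set_integrable lborel {0..T} (\<lambda>s. Ly s - Lx s)" using Ly_int Lx_int by auto
    have i2: "set_integrable lborel {0..T} (\<lambda>s. (Ly s - Lx s) - Dst s + (\<Sum>c\<in>coords m. lamg c s))"
      using i1 Dst_int ssl by auto
    show ?thesis using i2 set_integrable_cong[of lborel lborel "{0..T}" "{0..T}" Psi "\<lambda>s. (Ly s - Lx s) - Dst s + (\<Sum>c\<in>coords m. lamg c s)"]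
      LPsi by auto
  qed
  have JPsi: "cost_J p mc T y uA - cost_J p mc T x ustar = (LINT s:{0..T}|lborel. Psi s)"
  proof -
    have "cost_J p mc T y uA - cost_J p mc T x ustar = (LINT s:{0..T}|lborel. Ly s - Lx s)"
      unfolding cost_J_def Ly_def[symmetric] Lx_def[symmetric] using set_integral_diff(2)[OF Ly_int Lx_int] by simp
    also have "\<dots> = (LINT s:{0..T}|lborel. Psi s + Dst s - (\<Sum>c\<in>coords m. lamg c s))"
      by (rule set_lebesgue_integral_cong) (use LPsi in auto)
    also have "\<dots> = (LINT s:{0..T}|lborel. Psi s) + (LINT s:{0..T}|lborel. Dst s) - (LINT s:{0..T}|lborel. (\<Sum>c\<in>coords m. lamg c s))"
      using Psi_int Dst_int ssl by simp
    finally show ?thesis using Dst_I by simp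
  qed
  define Cc where "Cc = - \<delta> + 2 * KDh * aE"
  define Dc where "Dc = KQh * aE^2"
  have Psi_le: "Psi s \<le> indicator A s * Cc + Dc" if s: "s \<in> {0..T}" for s
  proof -
    have ndl: "nrm m (d s) \<le> aE" by (rule nd[OF s])
    have q: "Qh p m (uA s) (lam s) (d s) \<le> Dc"
    proof -
      have "Qh p m (uA s) (lam s) (d s) \<le> KQh * (nrm m (d s))^2" using KQh(2)[OF okxu[OF s] lamB[OF s], of "d s"] by linarith
      also have "\<dots> \<le> KQh * aE^2" by (intro mult_left_mono power_mono ndl nrm_nonneg KQh(1))
      finally show ?thesis unfolding Dc_def .
    qed
    show ?thesis
    proof (cases "s \<in> A")
      case True
      have u: "uA s = W s" using True by (simp add: uA_def fun_eq_iff)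
      have p1: "hu p m mc (x s) (uA s) (lam s) - hu p m mc (x s) (ustar s) (lam s) \<le> - \<delta>"
        using Aphi[OF True] unfolding u Phi_def by simp
      have p2: "Dh p m mc (uA s) (lam s) (x s) (d s) - Dh p m mc (ustar s) (lam s) (x s) (d s) \<le> 2 * KDh * aE"
      proof -
        have "\<bar>Dh p m mc (uA s) (lam s) (x s) (d s)\<bar> \<le> KDh * nrm m (d s)" by (rule KDh(2)[OF okxu[OF s] lamB[OF s]])
        moreover have "\<bar>Dh p m mc (ustar s) (lam s) (x s) (d s)\<bar> \<le> KDh * nrm m (d s)" by (rule KDh(2)[OF okxs[OF s] lamB[OF s]])
        moreover have "KDh * nrm m (d s) \<le> KDh * aE" by (rule mult_left_mono[OF ndl KDh(1)])
        ultimately show ?thesis by linarith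
      qed
      show ?thesis unfolding Psi_def Cc_def using True p1 p2 q by simp
    next
      case False
      have u: "uA s = ustar s" using False by (simp add: uA_def fun_eq_iff)
      show ?thesis using False q unfolding Psi_def u by simp
    qed
  qed
  have bnd_int: "set_integrable lborel {0..T} (\<lambda>s. indicator A s * Cc + Dc)"
    by (rule sint_bdd[where M="\<bar>Cc\<bar> + \<bar>Dc\<bar>"])
       (use A(1) in \<open>auto intro!: borel_measurable_add borel_measurable_times borel_measurable_indicator simp: indicator_def\<close>)
  have "(LINT s:{0..T}|lborel. Psi s) \<le> (LINT s:{0..T}|lborel. indicator A s * Cc + Dc)"
    by (rule set_integral_mono[OF Psi_int bnd_int Psi_le])
  also have "(LINT s:{0..T}|lborel. indicator A s * Cc + Dc) = Cc * mA + Dc * T"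
  proof -
    have fin: "emeasure lborel A < \<infinity>"
    proof -
      have "emeasure lborel A \<le> emeasure lborel {0..T}" using A(2) by (intro emeasure_mono) auto
      also have "\<dots> < top" using Tpos by simp
      finally show ?thesis by simp
    qed
    have "(LINT s:{0..T}|lborel. indicator A s * Cc + Dc) = (\<integral>s. indicator A s * Cc + indicator {0..T} s * Dc \<partial>lborel)"
      unfolding set_lebesgue_integral_def using A(2)
      by (intro Bochner_Integration.integral_cong) (auto simp: indicator_def)
    also have "\<dots> = (\<integral>s. indicator A s * Cc \<partial>lborel) + (\<integral>s. indicator {0..T} s * Dc \<partial>lborel)"
      using A(1) fin Tpos by (intro Bochner_Integration.integral_add integrable_mult_left integrable_real_indicator) auto
    also have "\<dots> = Cc * mA + Dc * T" unfolding mA_def using A(1) Tpos by simp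
    finally show ?thesis .
  qed
  also have "Cc * mA + Dc * T = mA * (- \<delta> + mA * C2)"
    unfolding Cc_def Dc_def aE_def C2_def by (simp add: algebra_simps power2_eq_square)
  also have "\<dots> < 0"
  proof -
    have "mA * C2 < \<delta>" using small2 unfolding mA_def .
    moreover have "0 < mA" using A(3) unfolding mA_def .
    ultimately show ?thesis by (simp add: mult_pos_neg)
  qed
  finally show False using JPsi Jle by simp
qed

end



context setting begin

lemma null_Bd:
  assumes dl: "0 < \<delta>"
  shows "{t\<in>{0..T}. \<delta> \<le> Phi t} \<in> null_sets lborel"
proof (rule ccontr)
  let ?B = "{t\<in>{0..T}. \<delta> \<le> Phi t}"
  have Beq: "?B = {0..T} \<inter> {t \<in> space lborel. \<delta> \<le> PhiB t}" using PhiB_eq by auto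
  have "{t \<in> space lborel. \<delta> \<le> PhiB t} \<in> sets lborel" using PhiB_meas by measurable
  then have Bm: "?B \<in> sets lborel" unfolding Beq by auto
  assume nn: "?B \<notin> null_sets lborel"
  define eta where "eta = min (1 / (c1 * EE + 1)) (\<delta> / (C2 + 1))"
  have "0 \<le> c1 * EE" using consts_nn by simp
  then have "0 < c1 * EE + 1" by linarith
  then have eta: "0 < eta" unfolding eta_def using consts_nn dl by auto
  obtain A where A: "A \<in> sets lborel" "A \<subseteq> ?B" "0 < measure lborel A" "measure lborel A \<le> eta"
    using small_piece[OF Bm _ nn Tpos eta] by blast
  define mA where "mA = measure lborel A"
  have cE: "0 \<le> c1 * EE" using consts_nn by simp
  have s1: "c1 * mA * EE \<le> 1"
  proof -
    have "mA \<le> 1 / (c1 * EE + 1)" using A(4) unfolding mA_def eta_def by simp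
    then have "(c1 * EE) * mA \<le> (c1 * EE) * (1 / (c1 * EE + 1))" by (rule mult_left_mono[OF _ cE])
    also have "\<dots> \<le> 1" using cE by (simp add: field_simps)
    finally show ?thesis by (simp add: algebra_simps)
  qed
  have s2: "mA * C2 < \<delta>"
  proof -
    have "mA \<le> \<delta> / (C2 + 1)" using A(4) unfolding mA_def eta_def by simp
    then have "mA * C2 \<le> \<delta> / (C2 + 1) * C2" by (rule mult_right_mono[OF _ consts_nn(4)])
    also have "\<dots> < \<delta>" using consts_nn(4) dl by (simp add: field_simps)
    finally show ?thesis .
  qed
  show False
    by (rule contra[OF A(1) _ A(3), of \<delta>]) (use A(2) s1 s2 in \<open>auto simp: mA_def\<close>)
qed

lemma main:
  "AE t in lborel. t \<in> {0..T} \<longrightarrow>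
     ustar t Ua = max 0 (min ((lam t CE * x t CE + lam t CL * x t CL) / (2 * A_a p)) (uAmax p)) \<and>
     ustar t Us = max 0 (min ((lam t CSs * x t CSs + lam t CSi * x t CSi) / (2 * A_s p)) (uSmax p)) \<and>
     ustar t Uk = max 0 (min (alpha_s p * lam t CSs * (x t CSs + x t CSi)\<^sup>2
                              / (2 * kappa_s p * A_k p)) (uKmax p)) \<and>
     (\<forall>j\<in>{1..mc}. ustar t (Uj j) =
        max 0 (min (lam t (CMi j) * x t (CMi j) / (2 * A_j p j)) (uMmax p j)))"
proof (rule AE_I')
  let ?N = "\<Union>n::nat. {t\<in>{0..T}. 1 / real (Suc n) \<le> Phi t}"
  show "?N \<in> null_sets lborel" by (intro null_sets_UN null_Bd) auto
  show "{t \<in> space lborel. \<not> (t \<in> {0..T} \<longrightarrow>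
     ustar t Ua = max 0 (min ((lam t CE * x t CE + lam t CL * x t CL) / (2 * A_a p)) (uAmax p)) \<and>
     ustar t Us = max 0 (min ((lam t CSs * x t CSs + lam t CSi * x t CSi) / (2 * A_s p)) (uSmax p)) \<and>
     ustar t Uk = max 0 (min (alpha_s p * lam t CSs * (x t CSs + x t CSi)\<^sup>2
                              / (2 * kappa_s p * A_k p)) (uKmax p)) \<and>
     (\<forall>j\<in>{1..mc}. ustar t (Uj j) =
        max 0 (min (lam t (CMi j) * x t (CMi j) / (2 * A_j p j)) (uMmax p j))))} \<subseteq> ?N"
  proof (rule subsetI, rule ccontr)
    fix t assume tin: "t \<in> {t \<in> space lborel. \<not> (t \<in> {0..T} \<longrightarrow>
     ustar t Ua = max 0 (min ((lam t CE * x t CE + lam t CL * x t CL) / (2 * A_a p)) (uAmax p)) \<and>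
     ustar t Us = max 0 (min ((lam t CSs * x t CSs + lam t CSi * x t CSi) / (2 * A_s p)) (uSmax p)) \<and>
     ustar t Uk = max 0 (min (alpha_s p * lam t CSs * (x t CSs + x t CSi)\<^sup>2
                              / (2 * kappa_s p * A_k p)) (uKmax p)) \<and>
     (\<forall>j\<in>{1..mc}. ustar t (Uj j) =
        max 0 (min (lam t (CMi j) * x t (CMi j) / (2 * A_j p j)) (uMmax p j))))}"
      and notN: "t \<notin> ?N"
    have t: "t \<in> {0..T}" using tin by auto
    have le0: "Phi t \<le> 0"
    proof (rule ccontr)
      assume "\<not> Phi t \<le> 0"
      then have "0 < Phi t" by simp
      then obtain n where n: "0 < n" "inverse (real n) < Phi t" using ex_inverse_of_nat_less by blast
      then obtain k where k: "n = Suc k" by (cases n) auto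
      have "t \<in> {t\<in>{0..T}. 1 / real (Suc k) \<le> Phi t}" using t n k by (auto simp: divide_inverse less_imp_le)
      then show False using notN by blast
    qed
    have z: "hu p m mc (x t) (ustar t) (lam t) - hu p m mc (x t) (Wf (x t) (lam t) (ustar t)) (lam t) \<le> 0"
      using le0 unfolding Phi_def W_def .
    note PZ = Phi_zero[OF inbox_ustar[OF t] z]
    have "ustar t Ua = max 0 (min ((lam t CE * x t CE + lam t CL * x t CL) / (2 * A_a p)) (uAmax p)) \<and>
     ustar t Us = max 0 (min ((lam t CSs * x t CSs + lam t CSi * x t CSi) / (2 * A_s p)) (uSmax p)) \<and>
     ustar t Uk = max 0 (min (alpha_s p * lam t CSs * (x t CSs + x t CSi)\<^sup>2
                              / (2 * kappa_s p * A_k p)) (uKmax p)) \<and>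
     (\<forall>j\<in>{1..mc}. ustar t (Uj j) =
        max 0 (min (lam t (CMi j) * x t (CMi j) / (2 * A_j p j)) (uMmax p j)))"
      using PZ by (auto simp: Wf_def)
    then show False using tin t by simp
  qed
qed

end



theorem theorem6:
  fixes p :: params and m mc :: nat and T :: real
    and x0 :: "coord \<Rightarrow> real"
    and ustar :: "real \<Rightarrow> cidx \<Rightarrow> real"
    and x lam :: "real \<Rightarrow> coord \<Rightarrow> real"
  assumes "m \<ge> 1" and "1 \<le> mc" and "mc \<le> m" and "T > 0"
    and "pos_params p m mc"
    and "\<forall>c\<in>coords m. x0 c \<ge> 0"
    and "admissible p mc T ustar"
    and "state_sol p m T x0 ustar x"
    and "\<forall>u y. admissible p mc T u \<and> state_sol p m T x0 u y
               \<longrightarrow> cost_J p mc T x ustar \<le> cost_J p mc T y u"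
    and "adjoint_sol p m mc T ustar x lam"
  shows "AE t in lborel. t \<in> {0..T} \<longrightarrow>
     ustar t Ua = max 0 (min ((lam t CE * x t CE + lam t CL * x t CL) / (2 * A_a p)) (uAmax p)) \<and>
     ustar t Us = max 0 (min ((lam t CSs * x t CSs + lam t CSi * x t CSi) / (2 * A_s p)) (uSmax p)) \<and>
     ustar t Uk = max 0 (min (alpha_s p * lam t CSs * (x t CSs + x t CSi)\<^sup>2
                              / (2 * kappa_s p * A_k p)) (uKmax p)) \<and>
     (\<forall>j\<in>{1..mc}. ustar t (Uj j) =
        max 0 (min (lam t (CMi j) * x t (CMi j) / (2 * A_j p j)) (uMmax p j)))"
proof -
  interpret setting p m mc T x0 ustar x lam
    by (rule setting.intro) (use assms in auto)
  show ?thesis by (rule main)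
qed


end
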